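(* Let $E$ be a uniformly convex Banach space. There exists $C>0$ such that for all continuous actions of $H$ on $E$ by affine isometries, all $a,b,c,d\in\mathbb{R}$ and all $\xi\in E$, \[\|\nu_{abcd}\cdot\xi-\widetilde{\nu}_{dcba}\cdot\xi\|\le C\big(e^{a+d-b}+e^{b+d-c}\big)\,\delta_{abcd}(\xi).\]
   Context: $H$ is the simply connected Lie group with Lie algebra spanned by $\mathfrak{X},\mathfrak{Y},\mathfrak{W},\mathfrak{Z}$ with $[\mathfrak{X},\mathfrak{Y}]=\mathfrak{W}$, $[\mathfrak{X},\mathfrak{W}]=2\mathfrak{Z}$, and all other brackets of basis elements zero; $X(t)=\exp(t\mathfrak{X})$ etc. $\gamma_a$ is the centered Gaussian with variance $e^{2a}$ and $L(\gamma_a)$ its pushforward; $\nu_{abcd}=Y(\gamma_a)W(\gamma_b)Z(\gamma_c)X(\gamma_d)$, $\widetilde{\nu}_{dcba}=X(\gamma_d)Z(\gamma_c)W(\gamma_b)Y(\gamma_a)$; $\mu\cdot\xi=\int g\cdot\xi\,d\mu(g)$; $\delta_{L,a}(\xi)=\max_{|t|\le e^a}\|L(t)\cdot\xi-\xi\|$ and $\delta_{abcd}(\xi)=\delta_{Y,a}(\xi)+\delta_{W,b}(\xi)+\delta_{Z,c}(\xi)+\delta_{X,d}(\xi)$. *)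

theory Defs
  imports "HOL-Probability.Probability"
begin

text \<open>H is realised as the semidirect product R^3 x| R, the R^3 = span(Y,W,Z) being abelian
and X acting by the nilpotent derivation N with N Y = W, N W = 2 Z, N Z = 0.
An element (y, w, z, s) stands for (yY + wW + zZ, s); multiplication is
(v, s)(v', s') = (v + exp(sN) v', s + s').  Its Lie algebra has exactly the brackets
[X,Y] = W, [X,W] = 2Z, others zero, and it is simply connected (diffeomorphic to R^4).\<close>

type_synonym H = "real \<times> real \<times> real \<times> real"

definition hmult :: "H \<Rightarrow> H \<Rightarrow> H" where
  "hmult g h = (case g of (y, w, z, s) \<Rightarrow> case h of (y', w', z', s') \<Rightarrow>
     (y + y', w + w' + s * y', z + z' + 2 * s * w' + s\<^sup>2 * y', s + s'))"

definition hone :: H where "hone = (0, 0, 0, 0)"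

definition hX :: "real \<Rightarrow> H" where "hX t = (0, 0, 0, t)"
definition hY :: "real \<Rightarrow> H" where "hY t = (t, 0, 0, 0)"
definition hW :: "real \<Rightarrow> H" where "hW t = (0, t, 0, 0)"
definition hZ :: "real \<Rightarrow> H" where "hZ t = (0, 0, t, 0)"

definition uniformly_convex :: "'e::real_normed_vector itself \<Rightarrow> bool" where
  "uniformly_convex _ \<longleftrightarrow>
     (\<forall>\<epsilon>>0. \<exists>\<delta>>0. \<forall>x y :: 'e. norm x \<le> 1 \<longrightarrow> norm y \<le> 1 \<longrightarrow> norm (x - y) \<ge> \<epsilon> \<longrightarrow>
        norm ((1/2) *\<^sub>R (x + y)) \<le> 1 - \<delta>)"

definition affine_isometry :: "('e::real_normed_vector \<Rightarrow> 'e) \<Rightarrow> bool" where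
  "affine_isometry f \<longleftrightarrow>
     (\<exists>L b. linear L \<and> (\<forall>x. norm (L x) = norm x) \<and> (\<forall>x. f x = L x + b))"

text \<open>Continuous action of H by affine isometries (continuity = continuity of orbit maps).\<close>
definition cont_affine_isometric_action :: "(H \<Rightarrow> 'e::real_normed_vector \<Rightarrow> 'e) \<Rightarrow> bool" where
  "cont_affine_isometric_action act \<longleftrightarrow>
     (\<forall>x. act hone x = x) \<and>
     (\<forall>g h x. act (hmult g h) x = act g (act h x)) \<and>
     (\<forall>g. affine_isometry (act g)) \<and>
     (\<forall>x. continuous_on UNIV (\<lambda>g. act g x))"

text \<open>Density of \<gamma>_a, the centred Gaussian with variance e^(2a) (standard deviation e^a).\<close>
definition gdens :: "real \<Rightarrow> real \<Rightarrow> real" where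
  "gdens a t = normal_density 0 (exp a) t"

text \<open>\<nu>_abcd \<cdot> \<xi> = \<integral> g\<cdot>\<xi> d\<nu>_abcd(g), where \<nu>_abcd = Y(\<gamma>_a) * W(\<gamma>_b) * Z(\<gamma>_c) * X(\<gamma>_d)
is the image of \<gamma>_a \<otimes> \<gamma>_b \<otimes> \<gamma>_c \<otimes> \<gamma>_d under (s1,s2,s3,s4) \<mapsto> Y(s1)W(s2)Z(s3)X(s4);
written as a (vector-valued) integral over R^4 against the product Gaussian density.\<close>
definition nu_act :: "(H \<Rightarrow> 'e::real_normed_vector \<Rightarrow> 'e) \<Rightarrow> real \<Rightarrow> real \<Rightarrow> real \<Rightarrow> real \<Rightarrow> 'e \<Rightarrow> 'e" where
  "nu_act act a b c d \<xi> = integral UNIV (\<lambda>(s1, s2, s3, s4).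
     (gdens a s1 * gdens b s2 * gdens c s3 * gdens d s4) *\<^sub>R
       act (hmult (hY s1) (hmult (hW s2) (hmult (hZ s3) (hX s4)))) \<xi>)"

text \<open>\<nu>~_dcba \<cdot> \<xi> with \<nu>~_dcba = X(\<gamma>_d) * Z(\<gamma>_c) * W(\<gamma>_b) * Y(\<gamma>_a).\<close>
definition nut_act :: "(H \<Rightarrow> 'e::real_normed_vector \<Rightarrow> 'e) \<Rightarrow> real \<Rightarrow> real \<Rightarrow> real \<Rightarrow> real \<Rightarrow> 'e \<Rightarrow> 'e" where
  "nut_act act d c b a \<xi> = integral UNIV (\<lambda>(s4, s3, s2, s1).
     (gdens d s4 * gdens c s3 * gdens b s2 * gdens a s1) *\<^sub>R
       act (hmult (hX s4) (hmult (hZ s3) (hmult (hW s2) (hY s1)))) \<xi>)"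

definition delta1 :: "(H \<Rightarrow> 'e::real_normed_vector \<Rightarrow> 'e) \<Rightarrow> (real \<Rightarrow> H) \<Rightarrow> real \<Rightarrow> 'e \<Rightarrow> real" where
  "delta1 act L a \<xi> = (SUP t \<in> {- exp a .. exp a}. norm (act (L t) \<xi> - \<xi>))"

definition delta4 :: "(H \<Rightarrow> 'e::real_normed_vector \<Rightarrow> 'e) \<Rightarrow> real \<Rightarrow> real \<Rightarrow> real \<Rightarrow> real \<Rightarrow> 'e \<Rightarrow> real" where
  "delta4 act a b c d \<xi> = delta1 act hY a \<xi> + delta1 act hW b \<xi> + delta1 act hZ c \<xi> + delta1 act hX d \<xi>"

end

theory Submission
  imports Defs
begin


definition bx :: "real \<Rightarrow> 'a::euclidean_space set" where
  "bx r = cbox (-(r *\<^sub>R One)) (r *\<^sub>R One)"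

lemma ball_sub_bx:
  assumes "B \<le> r"
  shows "ball (0::'a::euclidean_space) B \<subseteq> bx r"
proof
  fix x :: 'a assume "x \<in> ball 0 B"
  then have nx: "norm x < B" by simp
  show "x \<in> bx r"
    unfolding bx_def mem_box
  proof (intro ballI conjI)
    fix i :: 'a assume i: "i \<in> Basis"
    have "\<bar>x \<bullet> i\<bar> \<le> norm x" using i by (rule Basis_le_norm)
    then show "(-(r *\<^sub>R One)) \<bullet> i \<le> x \<bullet> i" "x \<bullet> i \<le> (r *\<^sub>R One) \<bullet> i"
      using nx assms i by (auto simp: inner_diff_left)
  qed
qed

lemma UNIV_not_cbox: "\<not> (\<exists>a b. (UNIV::'a::euclidean_space set) = cbox a b)"
  using bounded_cbox not_bounded_UNIV by metis

lemma tail_small: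
  fixes f :: "'a::euclidean_space \<Rightarrow> 'b::banach"
  assumes "f integrable_on UNIV" "e > 0"
  shows "\<exists>R. \<forall>r\<ge>R. norm (integral (bx r) f - integral UNIV f) < e"
proof -
  obtain B where B: "B > 0" "\<forall>a b. ball 0 B \<subseteq> cbox a b \<longrightarrow>
      (\<exists>z. ((\<lambda>x. if x \<in> UNIV then f x else 0) has_integral z) (cbox a b) \<and> norm (z - integral UNIV f) < e)"
    using has_integral_altD[OF integrable_integral[OF assms(1)] UNIV_not_cbox assms(2)] by blast
  show ?thesis
  proof (intro exI allI impI)
    fix r assume "B \<le> r"
    then have "ball 0 B \<subseteq> (bx r :: 'a set)" by (rule ball_sub_bx)
    then have "\<exists>z. (f has_integral z) (bx r) \<and> norm (z - integral UNIV f) < e"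
      using B(2) unfolding bx_def by simp
    then obtain z where z: "(f has_integral z) (bx r)" "norm (z - integral UNIV f) < e"
      by blast
    then show "norm (integral (bx r) f - integral UNIV f) < e"
      using integral_unique by metis
  qed
qed

lemma integrable_bx:
  fixes f :: "'a::euclidean_space \<Rightarrow> 'b::banach"
  assumes "f integrable_on UNIV"
  shows "f integrable_on bx r"
  unfolding bx_def using integrable_on_subcbox[OF assms] by auto

lemma tail_bound:
  fixes h :: "'a::euclidean_space \<Rightarrow> 'b::banach" and k :: "'a \<Rightarrow> real"
  assumes h: "h integrable_on UNIV" and k: "k integrable_on UNIV"
    and hk: "\<And>y. norm (h y) \<le> k y"
  shows "norm (integral UNIV h - integral (bx r) h) \<le> integral UNIV k - integral (bx r) k"
proof -
  have hb: "h integrable_on bx r" and kb: "k integrable_on bx r"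
    using integrable_bx h k by auto
  have eqh: "integral (UNIV - bx r) h = integral UNIV h - integral (bx r) h"
    by (rule integral_setdiff[OF h hb]) simp
  have eqk: "integral (UNIV - bx r) k = integral UNIV k - integral (bx r) k"
    by (rule integral_setdiff[OF k kb]) simp
  have ih: "h integrable_on (UNIV - bx r)"
    by (rule integrable_setdiff[OF integrable_integral[OF h] integrable_integral[OF hb]]) simp
  have ik: "k integrable_on (UNIV - bx r)"
    by (rule integrable_setdiff[OF integrable_integral[OF k] integrable_integral[OF kb]]) simp
  have "norm (integral (UNIV - bx r) h) \<le> integral (UNIV - bx r) k"
    by (rule integral_norm_bound_integral[OF ih ik hk])
  then show ?thesis using eqh eqk by simp
qed




lemma prod_integrable_lborel:
  fixes p :: "'a::euclidean_space \<Rightarrow> real" and q :: "'b::euclidean_space \<Rightarrow> real"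
  assumes pi: "integrable lborel p" and qi: "integrable lborel q"
    and p0: "\<And>x. 0 \<le> p x" and q0: "\<And>y. 0 \<le> q y"
  shows "integrable lborel (\<lambda>z::'a\<times>'b. p (fst z) * q (snd z))"
proof -
  have [measurable]: "p \<in> borel_measurable lborel" "q \<in> borel_measurable lborel"
    using pi qi by auto
  have m: "(\<lambda>z::'a\<times>'b. p (fst z) * q (snd z)) \<in> borel_measurable (lborel \<Otimes>\<^sub>M lborel)"
    by measurable
  have "(\<integral>\<^sup>+z. ennreal (p (fst z) * q (snd z)) \<partial>(lborel \<Otimes>\<^sub>M lborel))
      = (\<integral>\<^sup>+x. \<integral>\<^sup>+y. ennreal (p x * q y) \<partial>lborel \<partial>lborel)"
    by (subst lborel.nn_integral_fst[symmetric]) (auto simp: m)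
  also have "\<dots> = (\<integral>\<^sup>+x. ennreal (p x) * (\<integral>\<^sup>+y. ennreal (q y) \<partial>lborel) \<partial>lborel)"
    by (simp add: ennreal_mult p0 q0 nn_integral_cmult)
  also have "\<dots> = (\<integral>\<^sup>+x. ennreal (p x) \<partial>lborel) * (\<integral>\<^sup>+y. ennreal (q y) \<partial>lborel)"
    by (simp add: nn_integral_multc)
  also have "\<dots> = ennreal (integral\<^sup>L lborel p) * ennreal (integral\<^sup>L lborel q)"
    using pi qi p0 q0 by (simp add: nn_integral_eq_integral)
  also have "\<dots> < \<infinity>" by (simp add: ennreal_mult_less_top)
  finally have fin: "(\<integral>\<^sup>+z. ennreal (p (fst z) * q (snd z)) \<partial>(lborel \<Otimes>\<^sub>M lborel)) < \<infinity>" .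
  have "integrable (lborel \<Otimes>\<^sub>M lborel) (\<lambda>z::'a\<times>'b. p (fst z) * q (snd z))"
    by (rule integrableI_nonneg[OF m _ fin]) (simp add: p0 q0)
  then show ?thesis by (simp add: lborel_prod)
qed

lemma One_inner_Basis: "i \<in> Basis \<Longrightarrow> (One::'c::euclidean_space) \<bullet> i = 1"
  by (simp add: inner_sum_left inner_Basis if_distrib cong: if_cong)

lemma One_pair: "(One :: 'a::euclidean_space \<times> 'b::euclidean_space) = (One, One)"
proof (rule euclidean_eqI)
  fix i :: "'a \<times> 'b" assume i: "i \<in> Basis"
  then have "(One :: 'a \<times> 'b) \<bullet> i = 1" by (rule One_inner_Basis)
  moreover have "(One::'a, One::'b) \<bullet> i = 1"
    using i by (auto simp: Basis_prod_def inner_Pair One_inner_Basis)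
  ultimately show "(One :: 'a \<times> 'b) \<bullet> i = (One, One) \<bullet> i" by simp
qed

lemma bx_pair: "(bx r :: ('a::euclidean_space \<times> 'b::euclidean_space) set) = cbox (-(r *\<^sub>R One), -(r *\<^sub>R One)) (r *\<^sub>R One, r *\<^sub>R One)"
  unfolding bx_def One_pair by simp

lemma eq_if_small:
  fixes d :: "'a::real_normed_vector"
  assumes "\<And>e. e > 0 \<Longrightarrow> norm d \<le> e"
  shows "d = 0"
proof -
  have "norm d \<le> 0"
  proof (rule ccontr)
    assume "\<not> norm d \<le> 0"
    then have "norm d > 0" by simp
    with assms[of "norm d / 2"] show False by simp
  qed
  then show ?thesis by simp
qed

lemma fub2:
  fixes f :: "'a::euclidean_space \<times> 'b::euclidean_space \<Rightarrow> 'e::banach"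
    and p :: "'a \<Rightarrow> real" and q :: "'b \<Rightarrow> real"
  assumes fc: "continuous_on UNIV f" and pc: "continuous_on UNIV p"
    and pi: "integrable lborel p" and qi: "integrable lborel q"
    and p0: "\<And>x. 0 \<le> p x" and q0: "\<And>y. 0 \<le> q y"
    and dom: "\<And>x y. norm (f (x,y)) \<le> p x * q y"
  shows "f integrable_on UNIV" and fx_int: "\<And>x. (\<lambda>y. f (x,y)) integrable_on UNIV"
    and G_int: "(\<lambda>x. integral UNIV (\<lambda>y. f (x,y))) integrable_on UNIV"
    and "integral UNIV f = integral UNIV (\<lambda>x. integral UNIV (\<lambda>y. f (x,y)))"
proof -
  have pH: "p integrable_on UNIV" using integrable_on_lborel pi by blast
  have qH: "q integrable_on UNIV" using integrable_on_lborel qi by blast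
  have pqH: "(\<lambda>z::'a\<times>'b. p (fst z) * q (snd z)) integrable_on UNIV"
    using integrable_on_lborel prod_integrable_lborel[OF pi qi p0 q0] by blast
  have fbox: "\<And>a b. f integrable_on cbox a b"
    by (rule integrable_continuous, rule continuous_on_subset[OF fc]) auto
  show f_int: "f integrable_on UNIV"
    by (rule integrable_on_all_intervals_UNIV[OF fbox _ pqH]) (metis dom prod.collapse)
  have fxc: "continuous_on UNIV (\<lambda>y. f (x, y))" for x
    by (rule continuous_on_compose2[OF fc]) (auto intro!: continuous_intros)
  show fx: "(\<lambda>y. f (x,y)) integrable_on UNIV" for x
  proof (rule integrable_on_all_intervals_UNIV)
    show "(\<lambda>y. f (x, y)) integrable_on cbox a b" for a b
      by (rule integrable_continuous, rule continuous_on_subset[OF fxc]) auto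
    show "norm (f (x, y)) \<le> p x * q y" for y by (rule dom)
    show "(\<lambda>y. p x * q y) integrable_on UNIV" by (rule integrable_on_mult_right[OF qH])
  qed
  define G where "G = (\<lambda>x. integral UNIV (\<lambda>y. f (x,y)))"
  define Gr where "Gr = (\<lambda>r x. integral (bx r) (\<lambda>y. f (x,y)))"
  define tl where "tl = (\<lambda>r. integral UNIV q - integral (bx r) q)"
  have tailb: "norm (G x - Gr r x) \<le> p x * tl r" for x r
  proof -
    have "norm (G x - Gr r x) \<le> integral UNIV (\<lambda>y. p x * q y) - integral (bx r) (\<lambda>y. p x * q y)"
      unfolding G_def Gr_def
      by (rule tail_bound[OF fx integrable_on_mult_right[OF qH]]) (rule dom)
    then show ?thesis by (simp add: tl_def algebra_simps)
  qed
  have Grc: "continuous_on UNIV (Gr r)" for r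
    unfolding Gr_def bx_def
    by (rule integral_continuous_on_param) (auto intro: continuous_on_subset[OF fc])
  have tl_small: "\<exists>R. \<forall>r\<ge>R. \<bar>tl r\<bar> < e" if e0: "e > 0" for e
  proof -
    obtain R where "\<forall>r\<ge>R. norm (integral (bx r) q - integral UNIV q) < e"
      using tail_small[OF qH e0] by blast
    then show ?thesis unfolding tl_def by (metis abs_minus_commute real_norm_def)
  qed
  have Gbox: "G integrable_on cbox a b" for a b
  proof (rule integrable_uniform_limit)
    fix e :: real assume e: "e > 0"
    have "bounded (p ` cbox a b)"
      by (rule compact_imp_bounded, rule compact_continuous_image)
         (auto intro: continuous_on_subset[OF pc])
    then obtain M where M: "M > 0" "\<And>x. x \<in> cbox a b \<Longrightarrow> norm (p x) \<le> M"
      by (auto simp: bounded_pos)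
    obtain R where R: "\<And>r. r \<ge> R \<Longrightarrow> \<bar>tl r\<bar> < e / M"
      using tl_small[of "e / M"] e M by auto
    show "\<exists>g. (\<forall>x\<in>cbox a b. norm (G x - g x) \<le> e) \<and> g integrable_on cbox a b"
    proof (intro exI conjI ballI)
      fix x assume x: "x \<in> cbox a b"
      have "norm (G x - Gr R x) \<le> p x * tl R" by (rule tailb)
      also have "\<dots> \<le> M * \<bar>tl R\<bar>"
      proof -
        have "p x * tl R \<le> p x * \<bar>tl R\<bar>" by (rule mult_left_mono) (auto simp: p0)
        also have "\<dots> \<le> M * \<bar>tl R\<bar>" using M(2)[OF x] by (intro mult_right_mono) auto
        finally show ?thesis .
      qed
      also have "\<dots> \<le> M * (e / M)" using R[of R] M by (intro mult_left_mono) auto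
      also have "\<dots> = e" using M by simp
      finally show "norm (G x - Gr R x) \<le> e" .
    next
      show "Gr R integrable_on cbox a b"
        by (rule integrable_continuous, rule continuous_on_subset[OF Grc]) auto
    qed
  qed
  have Gnorm: "norm (G x) \<le> p x * integral UNIV q" for x
  proof -
    have "norm (G x) \<le> integral UNIV (\<lambda>y. p x * q y)"
      unfolding G_def by (rule integral_norm_bound_integral[OF fx integrable_on_mult_right[OF qH]]) (rule dom)
    then show ?thesis by simp
  qed
  have G_int: "G integrable_on UNIV"
    by (rule integrable_on_all_intervals_UNIV[OF Gbox Gnorm integrable_on_mult_left[OF pH]])
  then show "(\<lambda>x. integral UNIV (\<lambda>y. f (x,y))) integrable_on UNIV" unfolding G_def by simp
  define P where "P = integral UNIV p"
  have P0: "P \<ge> 0" unfolding P_def by (rule integral_nonneg[OF pH]) (simp add: p0)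
  have "integral UNIV f - integral UNIV G = 0"
  proof (rule eq_if_small)
    fix e :: real assume e: "e > 0"
    obtain R1 where R1: "\<And>r. r \<ge> R1 \<Longrightarrow> norm (integral (bx r) f - integral UNIV f) < e/3"
      using tail_small[OF f_int, of "e/3"] e by auto
    obtain R2 where R2: "\<And>r. r \<ge> R2 \<Longrightarrow> norm (integral (bx r) G - integral UNIV G) < e/3"
      using tail_small[OF G_int, of "e/3"] e by auto
    obtain R3 where R3: "\<And>r. r \<ge> R3 \<Longrightarrow> \<bar>tl r\<bar> < e/3 / (P + 1)"
      using tl_small[of "e/3/(P+1)"] e P0 by auto
    define r where "r = max R1 (max R2 R3)"
    have eqbox: "integral (bx r) f = integral (bx r) (Gr r)"
      unfolding bx_pair Gr_def
      by (subst integral_prod_continuous) (auto simp: bx_def intro: continuous_on_subset[OF fc])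
    have Grb: "Gr r integrable_on bx r"
      unfolding bx_def by (rule integrable_continuous, rule continuous_on_subset[OF Grc]) auto
    have Gb: "G integrable_on bx r" by (rule integrable_bx[OF G_int])
    have pb: "p integrable_on bx r" by (rule integrable_bx[OF pH])
    have "norm (integral (bx r) (Gr r) - integral (bx r) G) = norm (integral (bx r) (\<lambda>x. Gr r x - G x))"
      by (simp add: integral_diff[OF Grb Gb])
    also have "\<dots> \<le> integral (bx r) (\<lambda>x. p x * \<bar>tl r\<bar>)"
    proof (rule integral_norm_bound_integral)
      show "(\<lambda>x. Gr r x - G x) integrable_on bx r" by (rule integrable_diff[OF Grb Gb])
      show "(\<lambda>x. p x * \<bar>tl r\<bar>) integrable_on bx r" by (rule integrable_on_mult_left[OF pb])
      show "norm (Gr r x - G x) \<le> p x * \<bar>tl r\<bar>" for x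
        using tailb[of x r] p0[of x] by (metis norm_minus_commute abs_ge_self mult_left_mono order_trans)
    qed
    also have "\<dots> = integral (bx r) p * \<bar>tl r\<bar>" by simp
    also have "\<dots> \<le> P * \<bar>tl r\<bar>"
      unfolding P_def by (intro mult_right_mono integral_subset_le pb pH) (auto simp: p0)
    also have "\<dots> \<le> P * (e/3/(P+1))"
    proof -
      have "r \<ge> R3" by (simp add: r_def)
      then have "\<bar>tl r\<bar> < e/3/(P+1)" by (rule R3)
      then show ?thesis using P0 by (intro mult_left_mono) auto
    qed
    also have "\<dots> \<le> e/3"
      using P0 e by (simp add: field_simps)
    finally have m: "norm (integral (bx r) (Gr r) - integral (bx r) G) \<le> e/3" .
    have "norm (integral UNIV f - integral UNIV G) \<le>
        norm (integral (bx r) f - integral UNIV f) + norm (integral (bx r) (Gr r) - integral (bx r) G)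
        + norm (integral (bx r) G - integral UNIV G)"
    proof -
      have "integral UNIV f - integral UNIV G = -(integral (bx r) f - integral UNIV f)
          + (integral (bx r) (Gr r) - integral (bx r) G) + (integral (bx r) G - integral UNIV G)"
        using eqbox by (simp add: algebra_simps)
      then have "norm (integral UNIV f - integral UNIV G) = norm (-(integral (bx r) f - integral UNIV f)
          + (integral (bx r) (Gr r) - integral (bx r) G) + (integral (bx r) G - integral UNIV G))"
        by (rule arg_cong)
      moreover have "norm (-(integral (bx r) f - integral UNIV f)
          + (integral (bx r) (Gr r) - integral (bx r) G) + (integral (bx r) G - integral UNIV G))
          \<le> norm (-(integral (bx r) f - integral UNIV f)
          + (integral (bx r) (Gr r) - integral (bx r) G)) + norm (integral (bx r) G - integral UNIV G)"
        by (rule norm_triangle_ineq)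
      moreover have "norm (-(integral (bx r) f - integral UNIV f)
          + (integral (bx r) (Gr r) - integral (bx r) G)) \<le> norm (integral (bx r) f - integral UNIV f)
          + norm (integral (bx r) (Gr r) - integral (bx r) G)"
        using norm_triangle_ineq[of "-(integral (bx r) f - integral UNIV f)"]
        by (simp only: norm_minus_cancel)
      ultimately show ?thesis by linarith
    qed
    also have "\<dots> \<le> e"
    proof -
      have "r \<ge> R1" "r \<ge> R2" by (auto simp: r_def)
      then show ?thesis using R1[of r] R2[of r] m by linarith
    qed
    finally show "norm (integral UNIV f - integral UNIV G) \<le> e" .
  qed
  then show "integral UNIV f = integral UNIV (\<lambda>x. integral UNIV (\<lambda>y. f (x,y)))"
    unfolding G_def by simp
qed




lemma twiddle_UNIV:
  fixes f :: "'a::euclidean_space \<Rightarrow> 'e::banach" and g h :: "'a \<Rightarrow> 'a"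
  assumes hg: "\<And>x. h (g x) = x" and gh: "\<And>x. g (h x) = x"
    and contg: "\<And>x. continuous (at x) g"
    and gb: "\<And>u v. \<exists>w z. g ` cbox u v = cbox w z"
    and hb: "\<And>u v. \<exists>w z. h ` cbox u v = cbox w z"
    and cg: "\<And>u v. measure lborel (g ` cbox u v) = measure lborel (cbox u v)"
    and bl: "\<And>B. \<exists>B'. \<forall>a b. ball 0 B' \<subseteq> cbox a b \<longrightarrow> ball 0 B \<subseteq> g ` cbox a b"
    and fi: "f integrable_on UNIV"
  shows "((\<lambda>x. f (g x)) has_integral integral UNIV f) UNIV"
proof -
  have "\<forall>e>0. \<exists>B>0. \<forall>a b. ball 0 B \<subseteq> cbox a b \<longrightarrow>
      (\<exists>z. ((\<lambda>x. if x \<in> UNIV then f (g x) else 0) has_integral z) (cbox a b) \<and> norm (z - integral UNIV f) < e)"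
  proof (intro allI impI)
    fix e :: real assume e: "e > 0"
    obtain B where B: "B > 0" "\<forall>a b. ball 0 B \<subseteq> cbox a b \<longrightarrow>
      (\<exists>z. ((\<lambda>x. if x \<in> UNIV then f x else 0) has_integral z) (cbox a b) \<and> norm (z - integral UNIV f) < e)"
      using has_integral_altD[OF integrable_integral[OF fi] UNIV_not_cbox e] by blast
    obtain B' where B': "\<forall>a b. ball 0 B' \<subseteq> cbox a b \<longrightarrow> ball 0 B \<subseteq> g ` cbox a b"
      using bl by blast
    show "\<exists>B>0. \<forall>a b. ball 0 B \<subseteq> cbox a b \<longrightarrow>
      (\<exists>z. ((\<lambda>x. if x \<in> UNIV then f (g x) else 0) has_integral z) (cbox a b) \<and> norm (z - integral UNIV f) < e)"
    proof (rule exI[of _ "max B' 1"], intro conjI allI impI)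
      show "max B' 1 > 0" by simp
      fix a b :: 'a assume sub: "ball 0 (max B' 1) \<subseteq> cbox a b"
      have "ball 0 B' \<subseteq> cbox a b" using sub subset_ball[of B' "max B' 1" 0] by (meson max.cobounded1 subset_trans)
      then have s2: "ball 0 B \<subseteq> g ` cbox a b" using B' by blast
      obtain w z where wz: "g ` cbox a b = cbox w z" using gb by blast
      have s3: "ball 0 B \<subseteq> cbox w z" using s2 wz by simp
      have "\<exists>z'. ((\<lambda>x. if x \<in> UNIV then f x else 0) has_integral z') (cbox w z) \<and> norm (z' - integral UNIV f) < e"
        using B(2) s3 by blast
      then obtain z' where z': "(f has_integral z') (cbox w z)" "norm (z' - integral UNIV f) < e"
        by (auto simp only: UNIV_I if_True)
      have "((\<lambda>x. f (g x)) has_integral (1 / 1) *\<^sub>R z') (h ` cbox w z)"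
        by (rule has_integral_twiddle[where r=1, OF _ hg gh contg gb hb _ z'(1)]) (simp_all only: cg mult_1 zero_less_one)
      moreover have "h ` cbox w z = cbox a b"
        unfolding wz[symmetric] image_comp by (simp add: o_def hg)
      ultimately show "\<exists>z. ((\<lambda>x. if x \<in> UNIV then f (g x) else 0) has_integral z) (cbox a b) \<and> norm (z - integral UNIV f) < e"
        using z'(2) by (auto simp only: UNIV_I if_True div_by_1 scaleR_one)
    qed
  qed
  then show ?thesis
    by (subst has_integral_alt) (simp only: if_not_P[OF UNIV_not_cbox])
qed

lemma twiddle_iso:
  fixes f :: "'a::euclidean_space \<Rightarrow> 'e::banach" and g h :: "'a \<Rightarrow> 'a"
  assumes hg: "\<And>x. h (g x) = x" and gh: "\<And>x. g (h x) = x"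
    and contg: "\<And>x. continuous (at x) g"
    and gb: "\<And>u v. \<exists>w z. g ` cbox u v = cbox w z"
    and hb: "\<And>u v. \<exists>w z. h ` cbox u v = cbox w z"
    and cg: "\<And>u v. measure lborel (g ` cbox u v) = measure lborel (cbox u v)"
    and ng: "\<And>x. norm (g x) = norm x"
    and fi: "f integrable_on UNIV"
  shows "(\<lambda>x. f (g x)) integrable_on UNIV" "integral UNIV (\<lambda>x. f (g x)) = integral UNIV f"
proof -
  have bl: "\<exists>B'. \<forall>a b. ball 0 B' \<subseteq> cbox a b \<longrightarrow> ball 0 B \<subseteq> g ` cbox a b" for B
  proof (rule exI[of _ B], intro allI impI subsetI)
    fix a b y :: 'a assume s: "ball 0 B \<subseteq> cbox a b" and y: "y \<in> ball (0::'a) B"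
    have "norm (h y) = norm y" using ng[of "h y"] gh by simp
    then have "h y \<in> cbox a b" using s y by auto
    then show "y \<in> g ` cbox a b" using gh by (metis image_eqI)
  qed
  have "((\<lambda>x. f (g x)) has_integral integral UNIV f) UNIV"
    by (rule twiddle_UNIV[OF hg gh contg gb hb cg bl fi])
  then show "(\<lambda>x. f (g x)) integrable_on UNIV" "integral UNIV (\<lambda>x. f (g x)) = integral UNIV f"
    by (auto simp: integrable_on_def integral_unique)
qed

lemma image_inv_eq:
  assumes "\<And>x. h (g x) = x" "\<And>y. g (h y) = y"
  shows "g ` A = {y. h y \<in> A}"
proof (intro set_eqI iffI)
  fix y assume "y \<in> g ` A" then show "y \<in> {y. h y \<in> A}" using assms(1) by auto
next
  fix y assume "y \<in> {y. h y \<in> A}" then show "y \<in> g ` A" using assms(2) by (metis image_eqI mem_Collect_eq)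
qed

lemma translate_integral:
  fixes f :: "real \<Rightarrow> 'e::banach"
  assumes fi: "f integrable_on UNIV"
  shows "(\<lambda>x. f (x + c)) integrable_on UNIV" "integral UNIV (\<lambda>x. f (x + c)) = integral UNIV f"
proof -
  have gb: "(\<lambda>x. x + c) ` cbox u v = cbox (u + c) (v + c)" for u v :: real
    by (subst image_inv_eq[of "\<lambda>x. x - c"]) auto
  have hb: "(\<lambda>x. x - c) ` cbox u v = cbox (u - c) (v - c)" for u v :: real
    by (subst image_inv_eq[of "\<lambda>x. x + c"]) auto
  have "((\<lambda>x. f (x + c)) has_integral integral UNIV f) UNIV"
  proof (rule twiddle_UNIV[OF _ _ _ _ _ _ _ fi, of "\<lambda>x. x - c"])
    show "\<exists>w z. (\<lambda>x. x + c) ` cbox u v = cbox w z" for u v using gb by blast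
    show "\<exists>w z. (\<lambda>x. x - c) ` cbox u v = cbox w z" for u v using hb by blast
    show "measure lborel ((\<lambda>x. x + c) ` cbox u v) = measure lborel (cbox u v)" for u v
      unfolding gb by (simp add: content_real_if)
    show "\<exists>B'. \<forall>a b. ball 0 B' \<subseteq> cbox a b \<longrightarrow> ball 0 B \<subseteq> (\<lambda>x. x + c) ` cbox a b" for B
    proof (rule exI[of _ "B + \<bar>c\<bar>"], intro allI impI subsetI)
      fix a b y :: real assume s: "ball 0 (B + \<bar>c\<bar>) \<subseteq> cbox a b" and y: "y \<in> ball (0::real) B"
      have "y - c \<in> ball 0 (B + \<bar>c\<bar>)" using y by (auto simp: dist_real_def)
      then have "y - c \<in> cbox a b" using s by blast
      then show "y \<in> (\<lambda>x. x + c) ` cbox a b" by (metis diff_add_cancel image_eqI)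
    qed
  qed (auto intro!: continuous_intros)
  then show "(\<lambda>x. f (x + c)) integrable_on UNIV" "integral UNIV (\<lambda>x. f (x + c)) = integral UNIV f"
    by (auto simp: integrable_on_def integral_unique)
qed




definition it4 :: "(real \<Rightarrow> real \<Rightarrow> real \<Rightarrow> real \<Rightarrow> 'e::banach) \<Rightarrow> 'e" where
  "it4 f = integral UNIV (\<lambda>x1. integral UNIV (\<lambda>x2. integral UNIV (\<lambda>x3. integral UNIV (\<lambda>x4. f x1 x2 x3 x4))))"

lemma unc4: "(\<lambda>(x1,x2,x3,x4). f x1 x2 x3 x4) = (\<lambda>z. f (fst z) (fst (snd z)) (fst (snd (snd z))) (snd (snd (snd z))))"
  by (simp add: split_def)

lemma fub4:
  fixes f :: "real \<Rightarrow> real \<Rightarrow> real \<Rightarrow> real \<Rightarrow> 'e::banach" and p1 p2 p3 p4 :: "real \<Rightarrow> real"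
  assumes fc: "continuous_on UNIV (\<lambda>(x1,x2,x3,x4). f x1 x2 x3 x4)"
    and pc1: "continuous_on UNIV p1" and pc2: "continuous_on UNIV p2" and pc3: "continuous_on UNIV p3"
    and pi1: "integrable lborel p1" and pi2: "integrable lborel p2"
    and pi3: "integrable lborel p3" and pi4: "integrable lborel p4"
    and p01: "\<And>x. 0 \<le> p1 x" and p02: "\<And>x. 0 \<le> p2 x" and p03: "\<And>x. 0 \<le> p3 x" and p04: "\<And>x. 0 \<le> p4 x"
    and dom: "\<And>x1 x2 x3 x4. norm (f x1 x2 x3 x4) \<le> p1 x1 * p2 x2 * p3 x3 * p4 x4"
  shows "(\<lambda>(x1,x2,x3,x4). f x1 x2 x3 x4) integrable_on UNIV"
    and "integral UNIV (\<lambda>(x1,x2,x3,x4). f x1 x2 x3 x4) = it4 f"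
    and "\<And>x1 x2 x3. (\<lambda>x4. f x1 x2 x3 x4) integrable_on UNIV"
    and "\<And>x1 x2. (\<lambda>x3. integral UNIV (\<lambda>x4. f x1 x2 x3 x4)) integrable_on UNIV"
    and "\<And>x1. (\<lambda>x2. integral UNIV (\<lambda>x3. integral UNIV (\<lambda>x4. f x1 x2 x3 x4))) integrable_on UNIV"
    and "(\<lambda>x1. integral UNIV (\<lambda>x2. integral UNIV (\<lambda>x3. integral UNIV (\<lambda>x4. f x1 x2 x3 x4)))) integrable_on UNIV"
proof -
  have fc': "continuous_on UNIV (\<lambda>z. f (fst z) (fst (snd z)) (fst (snd (snd z))) (snd (snd (snd z))))"
    using fc unfolding unc4 .
  have L3: "(\<lambda>y::real\<times>real. f x1 x2 (fst y) (snd y)) integrable_on UNIV \<and>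
      (\<forall>x3. (\<lambda>x4. f x1 x2 x3 x4) integrable_on UNIV) \<and>
      (\<lambda>x3. integral UNIV (\<lambda>x4. f x1 x2 x3 x4)) integrable_on UNIV \<and>
      integral UNIV (\<lambda>y::real\<times>real. f x1 x2 (fst y) (snd y)) = integral UNIV (\<lambda>x3. integral UNIV (\<lambda>x4. f x1 x2 x3 x4))"
    for x1 x2
  proof -
    have c: "continuous_on UNIV (\<lambda>y::real\<times>real. f x1 x2 (fst y) (snd y))"
    proof -
      have cc: "continuous_on UNIV (\<lambda>y::real\<times>real. (x1, x2, y))" by (intro continuous_intros)
      show ?thesis using continuous_on_compose2[OF fc' cc] by simp
    qed
    have pc: "continuous_on UNIV (\<lambda>x3. p1 x1 * p2 x2 * p3 x3)"
      by (intro continuous_intros pc3)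
    have pi: "integrable lborel (\<lambda>x3. p1 x1 * p2 x2 * p3 x3)"
      using pi3 by simp
    have d: "norm (f x1 x2 (fst (x3, x4)) (snd (x3, x4))) \<le> (p1 x1 * p2 x2 * p3 x3) * p4 x4" for x3 x4
      using dom by simp
    note F = fub2[where f = "\<lambda>y::real\<times>real. f x1 x2 (fst y) (snd y)", OF c pc pi pi4 _ p04 d]
    have nn: "\<And>x. 0 \<le> p1 x1 * p2 x2 * p3 x"
      using p01 p02 p03 by simp
    show ?thesis using F[OF nn] by simp
  qed
  have L2: "(\<lambda>y::real\<times>real\<times>real. f x1 (fst y) (fst (snd y)) (snd (snd y))) integrable_on UNIV \<and>
      (\<lambda>x2. integral UNIV (\<lambda>x3. integral UNIV (\<lambda>x4. f x1 x2 x3 x4))) integrable_on UNIV \<and>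
      integral UNIV (\<lambda>y::real\<times>real\<times>real. f x1 (fst y) (fst (snd y)) (snd (snd y))) =
        integral UNIV (\<lambda>x2. integral UNIV (\<lambda>x3. integral UNIV (\<lambda>x4. f x1 x2 x3 x4)))"
    for x1
  proof -
    have c: "continuous_on UNIV (\<lambda>y::real\<times>real\<times>real. f x1 (fst y) (fst (snd y)) (snd (snd y)))"
    proof -
      have cc: "continuous_on UNIV (\<lambda>y::real\<times>real\<times>real. (x1, y))" by (intro continuous_intros)
      show ?thesis using continuous_on_compose2[OF fc' cc] by simp
    qed
    have pc: "continuous_on UNIV (\<lambda>x2. p1 x1 * p2 x2)"
      by (intro continuous_intros pc2)
    have pi: "integrable lborel (\<lambda>x2. p1 x1 * p2 x2)"
      using pi2 by simp
    have qi: "integrable lborel (\<lambda>y::real\<times>real. p3 (fst y) * p4 (snd y))"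
      by (rule prod_integrable_lborel[OF pi3 pi4 p03 p04])
    have d: "norm (f x1 (fst (x2, y)) (fst (snd (x2, y))) (snd (snd (x2, y)))) \<le> (p1 x1 * p2 x2) * (p3 (fst y) * p4 (snd y))" for x2 y
      using dom[of x1 x2 "fst y" "snd y"] by (simp add: mult_ac)
    have nn: "\<And>x. 0 \<le> p1 x1 * p2 x" using p01 p02 by simp
    have nq: "\<And>y. 0 \<le> p3 (fst y) * p4 (snd y)" using p03 p04 by simp
    note F = fub2[where f = "\<lambda>y::real\<times>real\<times>real. f x1 (fst y) (fst (snd y)) (snd (snd y))", OF c pc pi qi nn nq d]
    have e1: "(\<lambda>x2. integral UNIV (\<lambda>y::real\<times>real. f x1 x2 (fst y) (snd y))) =
        (\<lambda>x2. integral UNIV (\<lambda>x3. integral UNIV (\<lambda>x4. f x1 x2 x3 x4)))"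
      using L3 by auto
    show ?thesis using F e1 by simp
  qed
  have c: "continuous_on UNIV (\<lambda>z::real\<times>real\<times>real\<times>real. f (fst z) (fst (snd z)) (fst (snd (snd z))) (snd (snd (snd z))))"
    by (rule fc')
  have qi: "integrable lborel (\<lambda>y::real\<times>real\<times>real. p2 (fst y) * (p3 (fst (snd y)) * p4 (snd (snd y))))"
    using prod_integrable_lborel[OF pi2 prod_integrable_lborel[OF pi3 pi4 p03 p04] p02] p03 p04
    by (simp add: zero_le_mult_iff)
  have d: "norm (f (fst (x1, y)) (fst (snd (x1, y))) (fst (snd (snd (x1, y)))) (snd (snd (snd (x1, y))))) \<le>
      p1 x1 * (p2 (fst y) * (p3 (fst (snd y)) * p4 (snd (snd y))))" for x1 y
    using dom[of x1 "fst y" "fst (snd y)" "snd (snd y)"] by (simp add: mult_ac)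
  have nq: "\<And>y. 0 \<le> p2 (fst y) * (p3 (fst (snd y)) * p4 (snd (snd y)))" using p02 p03 p04 by simp
  note F = fub2[where f = "\<lambda>z::real\<times>real\<times>real\<times>real. f (fst z) (fst (snd z)) (fst (snd (snd z))) (snd (snd (snd z)))",
      OF c pc1 pi1 qi p01 nq d]
  have e1: "(\<lambda>x1. integral UNIV (\<lambda>y::real\<times>real\<times>real. f x1 (fst y) (fst (snd y)) (snd (snd y)))) =
      (\<lambda>x1. integral UNIV (\<lambda>x2. integral UNIV (\<lambda>x3. integral UNIV (\<lambda>x4. f x1 x2 x3 x4))))"
    using L2 by auto
  show "(\<lambda>(x1,x2,x3,x4). f x1 x2 x3 x4) integrable_on UNIV" unfolding unc4 using F by simp
  show "integral UNIV (\<lambda>(x1,x2,x3,x4). f x1 x2 x3 x4) = it4 f"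
    unfolding unc4 it4_def using F e1 by simp
  show "\<And>x1 x2 x3. (\<lambda>x4. f x1 x2 x3 x4) integrable_on UNIV" using L3 by blast
  show "\<And>x1 x2. (\<lambda>x3. integral UNIV (\<lambda>x4. f x1 x2 x3 x4)) integrable_on UNIV" using L3 by blast
  show "\<And>x1. (\<lambda>x2. integral UNIV (\<lambda>x3. integral UNIV (\<lambda>x4. f x1 x2 x3 x4))) integrable_on UNIV" using L2 by blast
  show "(\<lambda>x1. integral UNIV (\<lambda>x2. integral UNIV (\<lambda>x3. integral UNIV (\<lambda>x4. f x1 x2 x3 x4)))) integrable_on UNIV"
    using F e1 by simp
qed




lemma norm4: "norm (x1::real, x2::real, x3::real, x4::real) = sqrt (x1\<^sup>2 + x2\<^sup>2 + x3\<^sup>2 + x4\<^sup>2)"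
  by (simp add: norm_Pair add.assoc)

lemma content4: "measure lborel (cbox (u1::real, u2::real, u3::real, u4::real) (v1, v2, v3, v4)) =
   measure lborel (cbox u1 v1) * measure lborel (cbox u2 v2) * measure lborel (cbox u3 v3) * measure lborel (cbox u4 v4)"
  by (simp add: content_Pair mult_ac)

lemma perm_integral:
  fixes F :: "real\<times>real\<times>real\<times>real \<Rightarrow> 'e::banach" and g h :: "real\<times>real\<times>real\<times>real \<Rightarrow> real\<times>real\<times>real\<times>real"
  assumes hg: "\<And>x. h (g x) = x" and gh: "\<And>x. g (h x) = x"
    and contg: "\<And>x. continuous (at x) g"
    and gbox: "\<And>u v. g ` cbox u v = cbox (g u) (g v)"
    and hbox: "\<And>u v. h ` cbox u v = cbox (h u) (h v)"
    and cg: "\<And>u v. measure lborel (cbox (g u) (g v)) = measure lborel (cbox u v)"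
    and ng: "\<And>x. norm (g x) = norm x"
    and fi: "F integrable_on UNIV"
  shows "(\<lambda>x. F (g x)) integrable_on UNIV" "integral UNIV (\<lambda>x. F (g x)) = integral UNIV F"
proof -
  have a: "\<exists>w z. g ` cbox u v = cbox w z" for u v using gbox by blast
  have b: "\<exists>w z. h ` cbox u v = cbox w z" for u v using hbox by blast
  have c: "measure lborel (g ` cbox u v) = measure lborel (cbox u v)" for u v
    using gbox cg by simp
  show "(\<lambda>x. F (g x)) integrable_on UNIV" "integral UNIV (\<lambda>x. F (g x)) = integral UNIV F"
    using twiddle_iso[OF hg gh contg a b c ng fi] by auto
qed

definition "pm1 = (\<lambda>(x1::real,x2::real,x3::real,x4::real). (x1,x4,x3,x2))"
definition "pm2 = (\<lambda>(x1::real,x2::real,x3::real,x4::real). (x1,x2,x4,x3))"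
definition "pm3 = (\<lambda>(x1::real,x2::real,x3::real,x4::real). (x2,x4,x3,x1))"
definition "pm3i = (\<lambda>(y1::real,y2::real,y3::real,y4::real). (y4,y1,y3,y2))"

lemma pm1_props:
  "\<And>x. pm1 (pm1 x) = x" "\<And>x. continuous (at x) pm1"
  "\<And>u v. pm1 ` cbox u v = cbox (pm1 u) (pm1 v)"
  "\<And>u v. measure lborel (cbox (pm1 u) (pm1 v)) = measure lborel (cbox u v)"
  "\<And>x. norm (pm1 x) = norm x"
proof -
  show "pm1 (pm1 x) = x" for x by (cases x) (auto simp: pm1_def)
  show "continuous (at x) pm1" for x unfolding pm1_def split_def by (intro continuous_intros)
  show "pm1 ` cbox u v = cbox (pm1 u) (pm1 v)" for u v
    by (cases u; cases v) (subst image_inv_eq[of pm1], simp add: pm1_def, auto simp: pm1_def)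
  show "measure lborel (cbox (pm1 u) (pm1 v)) = measure lborel (cbox u v)" for u v
    by (cases u; cases v) (simp add: pm1_def content4 mult_ac)
  show "norm (pm1 x) = norm x" for x
    by (cases x) (simp add: pm1_def norm4 add_ac)
qed

lemma pm2_props:
  "\<And>x. pm2 (pm2 x) = x" "\<And>x. continuous (at x) pm2"
  "\<And>u v. pm2 ` cbox u v = cbox (pm2 u) (pm2 v)"
  "\<And>u v. measure lborel (cbox (pm2 u) (pm2 v)) = measure lborel (cbox u v)"
  "\<And>x. norm (pm2 x) = norm x"
proof -
  show "pm2 (pm2 x) = x" for x by (cases x) (auto simp: pm2_def)
  show "continuous (at x) pm2" for x unfolding pm2_def split_def by (intro continuous_intros)
  show "pm2 ` cbox u v = cbox (pm2 u) (pm2 v)" for u v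
    by (cases u; cases v) (subst image_inv_eq[of pm2], simp add: pm2_def, auto simp: pm2_def)
  show "measure lborel (cbox (pm2 u) (pm2 v)) = measure lborel (cbox u v)" for u v
    by (cases u; cases v) (simp add: pm2_def content4 mult_ac)
  show "norm (pm2 x) = norm x" for x
    by (cases x) (simp add: pm2_def norm4 add_ac)
qed

lemma pm3_props:
  "\<And>x. pm3i (pm3 x) = x" "\<And>x. pm3 (pm3i x) = x" "\<And>x. continuous (at x) pm3"
  "\<And>u v. pm3 ` cbox u v = cbox (pm3 u) (pm3 v)"
  "\<And>u v. pm3i ` cbox u v = cbox (pm3i u) (pm3i v)"
  "\<And>u v. measure lborel (cbox (pm3 u) (pm3 v)) = measure lborel (cbox u v)"
  "\<And>x. norm (pm3 x) = norm x"
proof -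
  show "pm3i (pm3 x) = x" for x by (cases x) (auto simp: pm3_def pm3i_def)
  show "pm3 (pm3i x) = x" for x by (cases x) (auto simp: pm3_def pm3i_def)
  show "continuous (at x) pm3" for x unfolding pm3_def split_def by (intro continuous_intros)
  show "pm3 ` cbox u v = cbox (pm3 u) (pm3 v)" for u v
  proof -
    obtain a b c d where u: "u = (a,b,c,d)" by (cases u) auto
    obtain a' b' c' d' where v: "v = (a',b',c',d')" by (cases v) auto
    show ?thesis unfolding u v
      by (subst image_inv_eq[of pm3i pm3]) (auto simp: pm3_def pm3i_def)
  qed
  show "pm3i ` cbox u v = cbox (pm3i u) (pm3i v)" for u v
  proof -
    obtain a b c d where u: "u = (a,b,c,d)" by (cases u) auto
    obtain a' b' c' d' where v: "v = (a',b',c',d')" by (cases v) auto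
    show ?thesis unfolding u v
      by (subst image_inv_eq[of pm3 pm3i]) (auto simp: pm3_def pm3i_def)
  qed
  show "measure lborel (cbox (pm3 u) (pm3 v)) = measure lborel (cbox u v)" for u v
    by (cases u; cases v) (simp add: pm3_def content4 mult_ac)
  show "norm (pm3 x) = norm x" for x
    by (cases x) (simp add: pm3_def norm4 add_ac)
qed

lemma pm1_int: fixes F :: "real\<times>real\<times>real\<times>real \<Rightarrow> 'e::banach" shows "F integrable_on UNIV \<Longrightarrow> integral UNIV (\<lambda>x. F (pm1 x)) = integral UNIV F"
  "F integrable_on UNIV \<Longrightarrow> (\<lambda>x. F (pm1 x)) integrable_on UNIV"
  using perm_integral[OF pm1_props(1) pm1_props(1) pm1_props(2) pm1_props(3) pm1_props(3) pm1_props(4) pm1_props(5)]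
  by auto

lemma pm2_int: fixes F :: "real\<times>real\<times>real\<times>real \<Rightarrow> 'e::banach" shows "F integrable_on UNIV \<Longrightarrow> integral UNIV (\<lambda>x. F (pm2 x)) = integral UNIV F"
  "F integrable_on UNIV \<Longrightarrow> (\<lambda>x. F (pm2 x)) integrable_on UNIV"
  using perm_integral[OF pm2_props(1) pm2_props(1) pm2_props(2) pm2_props(3) pm2_props(3) pm2_props(4) pm2_props(5)]
  by auto

lemma pm3_int: fixes F :: "real\<times>real\<times>real\<times>real \<Rightarrow> 'e::banach" shows "F integrable_on UNIV \<Longrightarrow> integral UNIV (\<lambda>x. F (pm3 x)) = integral UNIV F"
  "F integrable_on UNIV \<Longrightarrow> (\<lambda>x. F (pm3 x)) integrable_on UNIV"
  using perm_integral[OF pm3_props(1) pm3_props(2) pm3_props(3) pm3_props(4) pm3_props(5) pm3_props(6) pm3_props(7)]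
  by auto




lemma lvl_bound:
  fixes F G :: "real \<Rightarrow> 'e::banach" and q :: "real \<Rightarrow> real"
  assumes "F integrable_on UNIV" "G integrable_on UNIV" "q integrable_on UNIV"
    and "\<And>x. norm (F x - G x) \<le> k * q x"
  shows "norm (integral UNIV F - integral UNIV G) \<le> k * integral UNIV q"
proof -
  have "norm (integral UNIV F - integral UNIV G) = norm (integral UNIV (\<lambda>x. F x - G x))"
    using assms by (simp add: integral_diff)
  also have "\<dots> \<le> integral UNIV (\<lambda>x. k * q x)"
    by (rule integral_norm_bound_integral)
       (auto intro: integrable_diff assms integrable_on_mult_right)
  also have "\<dots> = k * integral UNIV q" by simp
  finally show ?thesis .
qed

definition fubok :: "(real \<Rightarrow> real \<Rightarrow> real \<Rightarrow> real \<Rightarrow> 'e::banach) \<Rightarrow> bool" where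
  "fubok f \<longleftrightarrow> (\<forall>x1 x2 x3. (\<lambda>x4. f x1 x2 x3 x4) integrable_on UNIV) \<and>
    (\<forall>x1 x2. (\<lambda>x3. integral UNIV (\<lambda>x4. f x1 x2 x3 x4)) integrable_on UNIV) \<and>
    (\<forall>x1. (\<lambda>x2. integral UNIV (\<lambda>x3. integral UNIV (\<lambda>x4. f x1 x2 x3 x4))) integrable_on UNIV) \<and>
    (\<lambda>x1. integral UNIV (\<lambda>x2. integral UNIV (\<lambda>x3. integral UNIV (\<lambda>x4. f x1 x2 x3 x4)))) integrable_on UNIV"

lemma it4_diff:
  fixes f h :: "real \<Rightarrow> real \<Rightarrow> real \<Rightarrow> real \<Rightarrow> 'e::banach" and q1 q2 q3 :: "real \<Rightarrow> real"
  assumes ff: "fubok f" and hh: "fubok h"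
    and qi: "q1 integrable_on UNIV" "q2 integrable_on UNIV" "q3 integrable_on UNIV"
    and q0: "\<And>x. 0 \<le> q1 x" "\<And>x. 0 \<le> q2 x"
    and c0: "0 \<le> c"
    and bd: "\<And>x1 x2 x3. norm (integral UNIV (\<lambda>x4. f x1 x2 x3 x4) - integral UNIV (\<lambda>x4. h x1 x2 x3 x4))
              \<le> c * q1 x1 * q2 x2 * q3 x3"
  shows "norm (it4 f - it4 h) \<le> c * integral UNIV q1 * integral UNIV q2 * integral UNIV q3"
proof -
  have L2: "norm (integral UNIV (\<lambda>x3. integral UNIV (\<lambda>x4. f x1 x2 x3 x4)) -
      integral UNIV (\<lambda>x3. integral UNIV (\<lambda>x4. h x1 x2 x3 x4))) \<le> (c * q1 x1 * q2 x2) * integral UNIV q3" for x1 x2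
    by (rule lvl_bound) (use ff hh qi bd in \<open>auto simp: fubok_def mult.assoc\<close>)
  have L1: "norm (integral UNIV (\<lambda>x2. integral UNIV (\<lambda>x3. integral UNIV (\<lambda>x4. f x1 x2 x3 x4))) -
      integral UNIV (\<lambda>x2. integral UNIV (\<lambda>x3. integral UNIV (\<lambda>x4. h x1 x2 x3 x4)))) \<le>
      (c * q1 x1 * integral UNIV q3) * integral UNIV q2" for x1
    by (rule lvl_bound) (use ff hh qi L2 in \<open>auto simp: fubok_def mult_ac\<close>)
  have "norm (it4 f - it4 h) \<le> (c * integral UNIV q3 * integral UNIV q2) * integral UNIV q1"
    unfolding it4_def
    by (rule lvl_bound) (use ff hh qi L1 in \<open>auto simp: fubok_def mult_ac\<close>)
  then show ?thesis by (simp add: mult_ac)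
qed




lemma nd_cont: "\<sigma> > 0 \<Longrightarrow> continuous_on UNIV (normal_density \<mu> \<sigma>)"
  unfolding normal_density_def[abs_def] by (intro continuous_intros) auto

lemma nd_int_lb: "\<sigma> > 0 \<Longrightarrow> integrable lborel (\<lambda>x. normal_density \<mu> \<sigma> x * \<bar>x - \<mu>\<bar>^k)"
  by (rule integrable_normal_moment_abs)

lemma nd_int_lb0: "\<sigma> > 0 \<Longrightarrow> integrable lborel (normal_density \<mu> \<sigma>)"
  by (rule integrable_normal_density)

lemma nd_int0: "\<sigma> > 0 \<Longrightarrow> normal_density \<mu> \<sigma> integrable_on UNIV"
  by (rule integrable_on_lborel) (rule integrable_normal_density)

lemma nd_int1: "\<sigma> > 0 \<Longrightarrow> (\<lambda>x. normal_density \<mu> \<sigma> x * \<bar>x - \<mu>\<bar>) integrable_on UNIV"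
  using integrable_on_lborel[OF nd_int_lb[where \<mu>=\<mu> and \<sigma>=\<sigma> and k=1]] by simp

lemma nd_int2: "\<sigma> > 0 \<Longrightarrow> (\<lambda>x. normal_density \<mu> \<sigma> x * (x - \<mu>)\<^sup>2) integrable_on UNIV"
  using integrable_on_lborel[OF integrable_normal_moment[where \<mu>=\<mu> and \<sigma>=\<sigma> and k=2]] by simp

lemma nd_I0: "\<sigma> > 0 \<Longrightarrow> integral UNIV (normal_density \<mu> \<sigma>) = 1"
  by (subst integral_lborel) (simp_all add: integrable_normal_density integral_normal_density)

lemma nd_I1: assumes "\<sigma> > 0" shows "integral UNIV (\<lambda>x. normal_density \<mu> \<sigma> x * \<bar>x - \<mu>\<bar>) = sqrt (2/pi) * \<sigma>"
proof -
  have "has_bochner_integral lborel (\<lambda>x. normal_density \<mu> \<sigma> x * \<bar>x - \<mu>\<bar>^(2 * 0 + 1)) (2^0 * \<sigma>^(2 * 0 + 1) * fact 0 * sqrt (2 / pi))"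
    using normal_moment_abs_odd[where \<mu>=\<mu> and \<sigma>=\<sigma> and k=0] assms by blast
  then have h: "has_bochner_integral lborel (\<lambda>x. normal_density \<mu> \<sigma> x * \<bar>x - \<mu>\<bar>) (sqrt (2/pi) * \<sigma>)"
    by (simp add: mult.commute)
  have "integral UNIV (\<lambda>x. normal_density \<mu> \<sigma> x * \<bar>x - \<mu>\<bar>) = integral\<^sup>L lborel (\<lambda>x. normal_density \<mu> \<sigma> x * \<bar>x - \<mu>\<bar>)"
    by (rule integral_lborel) (rule integrable.intros[OF h])
  also have "\<dots> = sqrt (2/pi) * \<sigma>" by (rule has_bochner_integral_integral_eq[OF h])
  finally show ?thesis .
qed

lemma nd_I2: assumes "\<sigma> > 0" shows "integral UNIV (\<lambda>x. normal_density \<mu> \<sigma> x * (x - \<mu>)\<^sup>2) = \<sigma>\<^sup>2"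
proof -
  have "has_bochner_integral lborel (\<lambda>x. normal_density \<mu> \<sigma> x * (x - \<mu>)^(2 * 1)) (fact (2 * 1) / ((2 / \<sigma>\<^sup>2) ^ 1 * fact 1))"
    using normal_moment_even[where \<mu>=\<mu> and \<sigma>=\<sigma> and k=1] assms by blast
  then have h: "has_bochner_integral lborel (\<lambda>x. normal_density \<mu> \<sigma> x * (x - \<mu>)\<^sup>2) (\<sigma>\<^sup>2)"
    using assms by (simp add: power2_eq_square)
  have "integral UNIV (\<lambda>x. normal_density \<mu> \<sigma> x * (x - \<mu>)\<^sup>2) = integral\<^sup>L lborel (\<lambda>x. normal_density \<mu> \<sigma> x * (x - \<mu>)\<^sup>2)"
    by (rule integral_lborel) (rule integrable.intros[OF h])
  also have "\<dots> = \<sigma>\<^sup>2" by (rule has_bochner_integral_integral_eq[OF h])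
  finally show ?thesis .
qed

lemma sqrt_2pi_le1: "sqrt (2/pi) \<le> 1"
  using pi_gt3 by (simp add: real_sqrt_le_1_iff)

lemma nd_I1_le: assumes "\<sigma> > 0" shows "integral UNIV (\<lambda>x. normal_density \<mu> \<sigma> x * \<bar>x - \<mu>\<bar>) \<le> \<sigma>"
  using nd_I1[OF assms, of \<mu>] sqrt_2pi_le1 assms by (simp add: mult_left_le_one_le)




lemma exp_diff_le: fixes X Y :: real shows "\<bar>exp X - exp Y\<bar> \<le> \<bar>X - Y\<bar> * exp (max X Y)"
proof -
  have k: "exp b - exp a \<le> (b - a) * exp b" if "a \<le> b" for a b :: real
  proof -
    have "1 + (a - b) \<le> exp (a - b)" by (rule exp_ge_add_one_self)
    then have "exp b * (1 + (a - b)) \<le> exp b * exp (a - b)" by (intro mult_left_mono) auto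
    also have "exp b * exp (a - b) = exp a" by (simp add: exp_diff)
    finally show ?thesis by (simp add: algebra_simps)
  qed
  show ?thesis
  proof (cases "X \<le> Y")
    case True
    then show ?thesis using k[OF True] by (simp add: max_def abs_if)
  next
    case False
    then have "Y \<le> X" by simp
    then show ?thesis using k[OF \<open>Y \<le> X\<close>] False by (simp add: max_def abs_if)
  qed
qed

lemma sqrt2_le: "sqrt 2 \<le> (3/2::real)"
  by (rule real_le_lsqrt) (auto simp: power2_eq_square)

lemma nd_diff_bound:
  fixes \<sigma> t u :: real
  assumes s: "\<sigma> > 0" and ts: "\<bar>t\<bar> \<le> \<sigma>"
  shows "\<bar>normal_density t \<sigma> u - normal_density 0 \<sigma> u\<bar>
          \<le> 2 * (\<bar>t\<bar> / \<sigma>\<^sup>2) * (2 * \<bar>u\<bar> + \<sigma>) * normal_density 0 (sqrt 2 * \<sigma>) u"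
proof -
  define c where "c = 1 / sqrt (2 * pi * \<sigma>\<^sup>2)"
  define X where "X = - (u - t)\<^sup>2 / (2 * \<sigma>\<^sup>2)"
  define Y where "Y = - (u - 0)\<^sup>2 / (2 * \<sigma>\<^sup>2)"
  define Z where "Z = - u\<^sup>2 / (4 * \<sigma>\<^sup>2)"
  have c0: "c > 0" unfolding c_def using s by simp
  have e1: "normal_density t \<sigma> u = c * exp X" unfolding normal_density_def c_def X_def by simp
  have e2: "normal_density 0 \<sigma> u = c * exp Y" unfolding normal_density_def c_def Y_def by simp
  have e3: "normal_density 0 (sqrt 2 * \<sigma>) u = c / sqrt 2 * exp Z"
  proof -
    have "sqrt (2 * pi * (sqrt 2 * \<sigma>)\<^sup>2) = sqrt 2 * sqrt (2 * pi * \<sigma>\<^sup>2)"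
      by (simp add: power_mult_distrib real_sqrt_mult[symmetric] mult_ac)
    moreover have "- (u - 0)\<^sup>2 / (2 * (sqrt 2 * \<sigma>)\<^sup>2) = Z"
      unfolding Z_def by (simp add: power_mult_distrib)
    ultimately show ?thesis unfolding normal_density_def c_def by simp
  qed
  have s1: "\<bar>normal_density t \<sigma> u - normal_density 0 \<sigma> u\<bar> = c * \<bar>exp X - exp Y\<bar>"
    unfolding e1 e2 using c0 by (simp add: abs_mult right_diff_distrib[symmetric])
  have s3: "\<bar>X - Y\<bar> \<le> \<bar>t\<bar> * (2 * \<bar>u\<bar> + \<sigma>) / (2 * \<sigma>\<^sup>2)"
  proof -
    have "X - Y = (t * (2 * u - t)) / (2 * \<sigma>\<^sup>2)"
      unfolding X_def Y_def using s by (simp add: field_simps power2_eq_square)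
    then have "\<bar>X - Y\<bar> = \<bar>t\<bar> * \<bar>2 * u - t\<bar> / (2 * \<sigma>\<^sup>2)" using s by (simp add: abs_mult)
    also have "\<dots> \<le> \<bar>t\<bar> * (2 * \<bar>u\<bar> + \<sigma>) / (2 * \<sigma>\<^sup>2)"
      using ts s by (intro divide_right_mono mult_left_mono) auto
    finally show ?thesis .
  qed
  have s4: "max X Y \<le> 1/2 + Z"
  proof -
    have qq: "2 * (u - t)\<^sup>2 + 2 * t\<^sup>2 - u\<^sup>2 = (u - 2 * t)\<^sup>2"
      by (simp add: power2_eq_square algebra_simps)
    have q: "u\<^sup>2 / 2 - t\<^sup>2 \<le> (u - t)\<^sup>2"
      using qq zero_le_power2[of "u - 2 * t"] by linarith
    have tt: "t\<^sup>2 \<le> \<sigma>\<^sup>2" using ts s by (metis abs_ge_zero power2_abs power_mono)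
    have s2: "0 < 2 * \<sigma>\<^sup>2" using s by simp
    have "X \<le> - (u\<^sup>2 / 2 - t\<^sup>2) / (2 * \<sigma>\<^sup>2)"
      unfolding X_def using q s2 by (intro divide_right_mono) auto
    also have "\<dots> = t\<^sup>2 / (2 * \<sigma>\<^sup>2) + Z"
      unfolding Z_def using s by (simp add: field_simps)
    also have "t\<^sup>2 / (2 * \<sigma>\<^sup>2) \<le> 1/2"
      using tt s by (simp add: field_simps)
    finally have "X \<le> 1/2 + Z" by simp
    moreover have "Y \<le> 1/2 + Z"
    proof -
      have "Y = 2 * Z" unfolding Y_def Z_def using s by (simp add: field_simps)
      moreover have "Z \<le> 0" unfolding Z_def using s by simp
      ultimately show ?thesis by linarith
    qed
    ultimately show ?thesis by simp
  qed
  have s5: "exp (max X Y) \<le> 2 * exp Z"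
  proof -
    have "exp (max X Y) \<le> exp (1/2 + Z)" using s4 by simp
    also have "\<dots> = exp (1/2) * exp Z" by (simp add: exp_add)
    also have "\<dots> \<le> 2 * exp Z" by (intro mult_right_mono exp_half_le2) auto
    finally show ?thesis .
  qed
  have "\<bar>normal_density t \<sigma> u - normal_density 0 \<sigma> u\<bar> \<le> c * (\<bar>X - Y\<bar> * exp (max X Y))"
    unfolding s1 using c0 exp_diff_le by (intro mult_left_mono) auto
  also have "\<dots> \<le> c * ((\<bar>t\<bar> * (2 * \<bar>u\<bar> + \<sigma>) / (2 * \<sigma>\<^sup>2)) * (2 * exp Z))"
    using c0 s3 s5 by (intro mult_left_mono mult_mono) auto
  also have "\<dots> = c * (\<bar>t\<bar> / \<sigma>\<^sup>2) * (2 * \<bar>u\<bar> + \<sigma>) * exp Z"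
    using s by (simp add: field_simps power2_eq_square)
  also have "\<dots> = sqrt 2 * (\<bar>t\<bar> / \<sigma>\<^sup>2) * (2 * \<bar>u\<bar> + \<sigma>) * normal_density 0 (sqrt 2 * \<sigma>) u"
    unfolding e3 by simp
  also have "\<dots> \<le> 2 * (\<bar>t\<bar> / \<sigma>\<^sup>2) * (2 * \<bar>u\<bar> + \<sigma>) * normal_density 0 (sqrt 2 * \<sigma>) u"
  proof -
    have "sqrt 2 \<le> (2::real)" using sqrt2_le by simp
    then show ?thesis using s by (intro mult_right_mono) auto
  qed
  finally show ?thesis .
qed

lemma nd_shift: "normal_density t \<sigma> (x + t) = normal_density 0 \<sigma> x"
  by (simp add: normal_density_def)

lemma int_scaleR_const:
  fixes f :: "'a::euclidean_space \<Rightarrow> real" and v :: "'e::real_normed_vector"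
  assumes "f integrable_on S"
  shows "(\<lambda>x. f x *\<^sub>R v) integrable_on S" "integral S (\<lambda>x. f x *\<^sub>R v) = integral S f *\<^sub>R v"
  using has_integral_scaleR_left[OF integrable_integral[OF assms], of v]
  by (auto simp: integrable_on_def integral_unique)

lemma Phi_int:
  fixes K :: "real \<Rightarrow> 'e::banach"
  assumes s: "\<sigma> > 0" and Kc: "continuous_on UNIV K" and A0: "0 \<le> A" and B0: "0 \<le> B"
    and KB: "\<And>w. norm (K w - K 0) \<le> A + B * \<bar>w\<bar>"
  shows "(\<lambda>u. normal_density \<mu> \<sigma> u *\<^sub>R K u) integrable_on UNIV"
proof (rule integrable_on_all_intervals_UNIV)
  show "(\<lambda>u. normal_density \<mu> \<sigma> u *\<^sub>R K u) integrable_on cbox a b" for a b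
    by (rule integrable_continuous, rule continuous_on_subset[of UNIV])
       (auto intro!: continuous_intros nd_cont s Kc)
  define C where "C = norm (K 0) + A + B * \<bar>\<mu>\<bar>"
  show "(\<lambda>u. C * normal_density \<mu> \<sigma> u + B * (normal_density \<mu> \<sigma> u * \<bar>u - \<mu>\<bar>)) integrable_on UNIV"
    by (intro integrable_add integrable_on_mult_right nd_int0 nd_int1 s)
  show "norm (normal_density \<mu> \<sigma> u *\<^sub>R K u) \<le> C * normal_density \<mu> \<sigma> u + B * (normal_density \<mu> \<sigma> u * \<bar>u - \<mu>\<bar>)" for u
  proof -
    have "norm (K u) \<le> norm (K 0) + norm (K u - K 0)" by (metis norm_triangle_sub add.commute)
    also have "\<dots> \<le> norm (K 0) + A + B * \<bar>u\<bar>" using KB[of u] by simp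
    also have "\<dots> \<le> C + B * \<bar>u - \<mu>\<bar>"
    proof -
      have "\<bar>u\<bar> \<le> \<bar>\<mu>\<bar> + \<bar>u - \<mu>\<bar>" by linarith
      then have "B * \<bar>u\<bar> \<le> B * \<bar>\<mu>\<bar> + B * \<bar>u - \<mu>\<bar>" using B0 by (metis distrib_left mult_left_mono)
      then show ?thesis unfolding C_def by simp
    qed
    finally have "normal_density \<mu> \<sigma> u * norm (K u) \<le> normal_density \<mu> \<sigma> u * (C + B * \<bar>u - \<mu>\<bar>)"
      by (intro mult_left_mono) auto
    then show ?thesis by (simp add: algebra_simps)
  qed
qed

lemma shift1:
  fixes K :: "real \<Rightarrow> 'e::banach" and \<sigma> t A B :: real
  assumes s: "\<sigma> > 0" and Kc: "continuous_on UNIV K" and A0: "0 \<le> A" and B0: "0 \<le> B"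
    and KB: "\<And>w. norm (K w - K 0) \<le> A + B * \<bar>w\<bar>"
  shows "norm (integral UNIV (\<lambda>w. normal_density 0 \<sigma> w *\<^sub>R K (w + t)) - integral UNIV (\<lambda>w. normal_density 0 \<sigma> w *\<^sub>R K w))
           \<le> 12 * (\<bar>t\<bar> / \<sigma>) * (A + B * \<sigma>)"
proof -
  note PI = Phi_int[OF s Kc A0 B0 KB]
  have eq1: "integral UNIV (\<lambda>w. normal_density 0 \<sigma> w *\<^sub>R K (w + t)) = integral UNIV (\<lambda>u. normal_density t \<sigma> u *\<^sub>R K u)"
    using translate_integral(2)[OF PI[of t], of t] by (simp add: nd_shift)
  define D where "D = (\<lambda>u. (normal_density t \<sigma> u - normal_density 0 \<sigma> u) *\<^sub>R (K u - K 0))"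
  have Deq: "D u = (normal_density t \<sigma> u *\<^sub>R K u - normal_density 0 \<sigma> u *\<^sub>R K u) -
      (normal_density t \<sigma> u *\<^sub>R K 0 - normal_density 0 \<sigma> u *\<^sub>R K 0)" for u
    unfolding D_def by (simp add: algebra_simps)
  note c1 = int_scaleR_const[OF nd_int0[OF s, of t], of "K 0"]
  note c0 = int_scaleR_const[OF nd_int0[OF s, of 0], of "K 0"]
  have i1: "(\<lambda>u. normal_density t \<sigma> u *\<^sub>R K u - normal_density 0 \<sigma> u *\<^sub>R K u) integrable_on UNIV"
    by (intro integrable_diff PI)
  have i2: "(\<lambda>u. normal_density t \<sigma> u *\<^sub>R K 0 - normal_density 0 \<sigma> u *\<^sub>R K 0) integrable_on UNIV"
    by (intro integrable_diff c1(1) c0(1))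
  have Dint: "D integrable_on UNIV" unfolding Deq[abs_def] by (rule integrable_diff[OF i1 i2])
  have eq2: "integral UNIV (\<lambda>u. normal_density t \<sigma> u *\<^sub>R K u) - integral UNIV (\<lambda>u. normal_density 0 \<sigma> u *\<^sub>R K u) = integral UNIV D"
  proof -
    have "integral UNIV D = integral UNIV (\<lambda>u. normal_density t \<sigma> u *\<^sub>R K u - normal_density 0 \<sigma> u *\<^sub>R K u) -
        integral UNIV (\<lambda>u. normal_density t \<sigma> u *\<^sub>R K 0 - normal_density 0 \<sigma> u *\<^sub>R K 0)"
      unfolding Deq[abs_def] by (rule integral_diff[OF i1 i2])
    also have "integral UNIV (\<lambda>u. normal_density t \<sigma> u *\<^sub>R K 0 - normal_density 0 \<sigma> u *\<^sub>R K 0) = 0"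
      using c1 c0 by (simp add: integral_diff nd_I0[OF s])
    finally show ?thesis by (simp add: integral_diff PI)
  qed
  define \<psi> where "\<psi> = (\<lambda>u. \<bar>normal_density t \<sigma> u - normal_density 0 \<sigma> u\<bar> * (A + B * \<bar>u\<bar>))"
  define \<beta>1 where "\<beta>1 = (\<lambda>u. (A + B * \<bar>t\<bar>) * normal_density t \<sigma> u + B * (normal_density t \<sigma> u * \<bar>u - t\<bar>)
      + (A * normal_density 0 \<sigma> u + B * (normal_density 0 \<sigma> u * \<bar>u - 0\<bar>)))"
  have b1int: "\<beta>1 integrable_on UNIV"
    unfolding \<beta>1_def by (intro integrable_add integrable_on_mult_right nd_int0 nd_int1 s)
  have b1I: "integral UNIV \<beta>1 \<le> 2 * A + B * \<bar>t\<bar> + 2 * B * \<sigma>"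
  proof -
    have "integral UNIV \<beta>1 = (A + B * \<bar>t\<bar>) * 1 + B * integral UNIV (\<lambda>u. normal_density t \<sigma> u * \<bar>u - t\<bar>)
        + (A * 1 + B * integral UNIV (\<lambda>u. normal_density 0 \<sigma> u * \<bar>u - 0\<bar>))"
      unfolding \<beta>1_def
      using nd_int1[OF s, of 0] by (simp add: integral_add integrable_add integrable_on_mult_right nd_int0 nd_int1 s nd_I0[OF s])
    also have "\<dots> \<le> (A + B * \<bar>t\<bar>) * 1 + B * \<sigma> + (A * 1 + B * \<sigma>)"
      using nd_I1_le[OF s, of t] nd_I1_le[OF s, of 0] B0
      by (intro add_mono mult_left_mono order_refl) auto
    finally show ?thesis by (simp add: algebra_simps)
  qed
  have psi_le_b1: "\<psi> u \<le> \<beta>1 u" for u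
  proof -
    have "\<psi> u \<le> (normal_density t \<sigma> u + normal_density 0 \<sigma> u) * (A + B * \<bar>u\<bar>)"
    proof -
      have "\<bar>normal_density t \<sigma> u - normal_density 0 \<sigma> u\<bar> \<le> normal_density t \<sigma> u + normal_density 0 \<sigma> u"
        using normal_density_nonneg[of t \<sigma> u] normal_density_nonneg[of 0 \<sigma> u] by arith
      then show ?thesis unfolding \<psi>_def using A0 B0 by (intro mult_right_mono) auto
    qed
    also have "\<dots> \<le> normal_density t \<sigma> u * (A + B * \<bar>t\<bar> + B * \<bar>u - t\<bar>) + normal_density 0 \<sigma> u * (A + B * \<bar>u\<bar>)"
    proof -
      have "B * \<bar>u\<bar> \<le> B * \<bar>t\<bar> + B * \<bar>u - t\<bar>" using B0 by (metis abs_triangle_ineq2_sym distrib_left mult_left_mono add.commute abs_triangle_ineq4 diff_add_cancel abs_triangle_ineq order_trans le_diff_eq)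
      then have "normal_density t \<sigma> u * (A + B * \<bar>u\<bar>) \<le> normal_density t \<sigma> u * (A + B * \<bar>t\<bar> + B * \<bar>u - t\<bar>)"
        by (intro mult_left_mono) auto
      then show ?thesis by (simp add: distrib_right)
    qed
    also have "\<dots> = \<beta>1 u" unfolding \<beta>1_def by (simp add: algebra_simps)
    finally show ?thesis .
  qed
  have psi_int: "\<psi> integrable_on UNIV"
  proof (rule integrable_on_all_intervals_UNIV[OF _ _ b1int])
    show "\<psi> integrable_on cbox a b" for a b
      unfolding \<psi>_def
      by (rule integrable_continuous, rule continuous_on_subset[of UNIV])
         (auto intro!: continuous_intros nd_cont s)
    show "norm (\<psi> u) \<le> \<beta>1 u" for u
      using psi_le_b1[of u] A0 B0 by (simp add: \<psi>_def abs_mult)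
  qed
  have Dle: "norm (integral UNIV D) \<le> integral UNIV \<psi>"
  proof (rule integral_norm_bound_integral[OF Dint psi_int])
    fix u
    have "norm (D u) = \<bar>normal_density t \<sigma> u - normal_density 0 \<sigma> u\<bar> * norm (K u - K 0)"
      unfolding D_def by simp
    also have "\<dots> \<le> \<psi> u" unfolding \<psi>_def by (intro mult_left_mono KB) auto
    finally show "norm (D u) \<le> \<psi> u" .
  qed
  have Jb: "integral UNIV \<psi> \<le> 12 * (\<bar>t\<bar> / \<sigma>) * (A + B * \<sigma>)"
  proof (cases "\<bar>t\<bar> \<le> \<sigma>")
    case False
    have "integral UNIV \<psi> \<le> integral UNIV \<beta>1"
      by (rule integral_le[OF psi_int b1int psi_le_b1])
    also have "\<dots> \<le> 2 * A + B * \<bar>t\<bar> + 2 * B * \<sigma>" by (rule b1I)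
    also have "\<dots> \<le> 12 * (\<bar>t\<bar> / \<sigma>) * (A + B * \<sigma>)"
    proof -
      have r: "\<bar>t\<bar> / \<sigma> \<ge> 1" using False s by simp
      have "2 * A \<le> 12 * A" using A0 by simp
      also have "\<dots> = 12 * 1 * A" by simp
      also have "\<dots> \<le> 12 * (\<bar>t\<bar> / \<sigma>) * A" using r A0 by (intro mult_right_mono) auto
      finally have "2 * A \<le> 12 * (\<bar>t\<bar> / \<sigma>) * A" .
      moreover have "B * \<bar>t\<bar> + 2 * B * \<sigma> \<le> 12 * (\<bar>t\<bar> / \<sigma>) * (B * \<sigma>)"
      proof -
        have "B * \<bar>t\<bar> + 2 * B * \<sigma> \<le> 3 * (B * \<bar>t\<bar>)" using False B0 by (simp add: mult_left_mono)
        also have "\<dots> \<le> 12 * (B * \<bar>t\<bar>)" using B0 by simp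
        also have "\<dots> = 12 * (\<bar>t\<bar> / \<sigma>) * (B * \<sigma>)" using s by simp
        finally show ?thesis .
      qed
      ultimately show ?thesis by (simp add: distrib_left)
    qed
    finally show ?thesis .
  next
    case True
    define s' where "s' = sqrt 2 * \<sigma>"
    have s'0: "s' > 0" unfolding s'_def using s by simp
    define nd' where "nd' = normal_density 0 s'"
    define \<beta>2 where "\<beta>2 = (\<lambda>u. 2 * (\<bar>t\<bar> / \<sigma>\<^sup>2) * ((2 * A + B * \<sigma>) * (nd' u * \<bar>u - 0\<bar>) + A * \<sigma> * nd' u + 2 * B * (nd' u * (u - 0)\<^sup>2)))"
    have b2int: "\<beta>2 integrable_on UNIV"
      unfolding \<beta>2_def nd'_def by (intro integrable_add integrable_on_mult_right nd_int0 nd_int1 nd_int2 s'0)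
    have psi_le_b2: "\<psi> u \<le> \<beta>2 u" for u
    proof -
      have "\<psi> u \<le> (2 * (\<bar>t\<bar> / \<sigma>\<^sup>2) * (2 * \<bar>u\<bar> + \<sigma>) * nd' u) * (A + B * \<bar>u\<bar>)"
        unfolding \<psi>_def nd'_def s'_def using A0 B0 nd_diff_bound[OF s True, of u]
        by (intro mult_right_mono) auto
      also have "\<dots> = \<beta>2 u" unfolding \<beta>2_def using s by (simp add: field_simps power2_eq_square abs_mult_self_eq)
      finally show ?thesis .
    qed
    have b2I: "integral UNIV \<beta>2 = 2 * (\<bar>t\<bar> / \<sigma>\<^sup>2) * ((2 * A + B * \<sigma>) * (sqrt (2/pi) * s') + A * \<sigma> * 1 + 2 * B * s'\<^sup>2)"
    proof -
      have i1: "(\<lambda>u. normal_density 0 s' u * \<bar>u\<bar>) integrable_on UNIV" using nd_int1[OF s'0, of 0] by simp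
      have i2: "(\<lambda>u. normal_density 0 s' u * u\<^sup>2) integrable_on UNIV" using nd_int2[OF s'0, of 0] by simp
      have I1: "integral UNIV (\<lambda>u. normal_density 0 s' u * \<bar>u\<bar>) = sqrt (2/pi) * s'" using nd_I1[OF s'0, of 0] by simp
      have I2: "integral UNIV (\<lambda>u. normal_density 0 s' u * u\<^sup>2) = s'\<^sup>2" using nd_I2[OF s'0, of 0] by simp
      show ?thesis unfolding \<beta>2_def nd'_def
        by (simp add: integral_add integrable_add integrable_on_mult_right i1 i2 nd_int0 s'0 I1 I2 nd_I0[OF s'0])
    qed
    have "integral UNIV \<psi> \<le> integral UNIV \<beta>2"
      by (rule integral_le[OF psi_int b2int psi_le_b2])
    also have "\<dots> \<le> 2 * (\<bar>t\<bar> / \<sigma>\<^sup>2) * ((2 * A + B * \<sigma>) * (3/2 * \<sigma>) + A * \<sigma> * 1 + 2 * B * (2 * \<sigma>\<^sup>2))"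
    proof -
      have "sqrt (2/pi) * s' \<le> 1 * (3/2 * \<sigma>)"
        unfolding s'_def using sqrt_2pi_le1 sqrt2_le s by (intro mult_mono) auto
      moreover have "s'\<^sup>2 = 2 * \<sigma>\<^sup>2" unfolding s'_def by (simp add: power_mult_distrib)
      ultimately show ?thesis unfolding b2I using A0 B0 s
        by (intro mult_left_mono add_mono mult_left_mono order_refl) auto
    qed
    also have "\<dots> = (\<bar>t\<bar> / \<sigma>) * (8 * A + 11 * B * \<sigma>)"
      using s by (simp add: field_simps power2_eq_square)
    also have "\<dots> \<le> (\<bar>t\<bar> / \<sigma>) * (12 * (A + B * \<sigma>))"
      using A0 B0 s by (intro mult_left_mono) auto
    finally show ?thesis by (simp add: mult_ac)
  qed
  show ?thesis
    unfolding eq1 using eq2 Dle Jb by simp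
qed




lemma one_param:
  "hmult (hY s) (hY t) = hY (s + t)" "hmult (hW s) (hW t) = hW (s + t)"
  "hmult (hZ s) (hZ t) = hZ (s + t)" "hmult (hX s) (hX t) = hX (s + t)"
  "hY 0 = hone" "hW 0 = hone" "hZ 0 = hone" "hX 0 = hone"
  by (simp_all add: hmult_def hY_def hW_def hZ_def hX_def hone_def)

lemma one_param_cont:
  "continuous_on UNIV hY" "continuous_on UNIV hW" "continuous_on UNIV hZ" "continuous_on UNIV hX"
  unfolding hY_def[abs_def] hW_def[abs_def] hZ_def[abs_def] hX_def[abs_def]
  by (intro continuous_intros)+

context
  fixes act :: "H \<Rightarrow> 'e::banach \<Rightarrow> 'e"
  assumes CA: "cont_affine_isometric_action act"
begin

lemma act_one: "act hone x = x"
  using CA by (simp add: cont_affine_isometric_action_def)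

lemma act_mult: "act (hmult g h) x = act g (act h x)"
  using CA unfolding cont_affine_isometric_action_def by blast

lemma act_cont: "continuous_on UNIV (\<lambda>g. act g x)"
  using CA by (simp add: cont_affine_isometric_action_def)

lemma act_iso: "norm (act g x - act g y) = norm (x - y)"
proof -
  obtain L b where L: "linear L" "\<And>x. norm (L x) = norm x" "\<And>x. act g x = L x + b"
    using CA unfolding cont_affine_isometric_action_def affine_isometry_def by blast
  have "act g x - act g y = L (x - y)" using L by (simp add: linear_diff)
  then show ?thesis using L by simp
qed

lemma act_comp_disp: "norm (act g (act h x) - x) \<le> norm (act g x - x) + norm (act h x - x)"
proof -
  have "norm (act g (act h x) - x) \<le> norm (act g (act h x) - act g x) + norm (act g x - x)"
    using norm_triangle_ineq[of "act g (act h x) - act g x" "act g x - x"] by simp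
  then show ?thesis by (simp add: act_iso)
qed

lemma disp:
  assumes op: "\<And>s t. hmult (L s) (L t) = L (s + t)" and L0: "L 0 = hone"
    and Lc: "continuous_on UNIV L"
  shows "0 \<le> delta1 act L a \<xi>" and "norm (act (L t) \<xi> - \<xi>) \<le> (1 + \<bar>t\<bar> / exp a) * delta1 act L a \<xi>"
proof -
  define \<phi> where "\<phi> = (\<lambda>t. norm (act (L t) \<xi> - \<xi>))"
  have \<phi>c: "continuous_on UNIV \<phi>"
    unfolding \<phi>_def by (intro continuous_intros continuous_on_compose2[OF act_cont Lc]) auto
  have bdd: "bdd_above (\<phi> ` {- exp a .. exp a})"
    by (rule bounded_imp_bdd_above, rule compact_imp_bounded, rule compact_continuous_image)
       (auto intro: continuous_on_subset[OF \<phi>c])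
  have up: "\<phi> u \<le> delta1 act L a \<xi>" if "\<bar>u\<bar> \<le> exp a" for u
    unfolding delta1_def \<phi>_def[symmetric] using that bdd by (intro cSUP_upper) auto
  have \<phi>0: "\<phi> 0 = 0" unfolding \<phi>_def by (simp add: L0 act_one)
  show d0: "0 \<le> delta1 act L a \<xi>" using up[of 0] \<phi>0 by simp
  have iter: "\<phi> (real n * u) \<le> real n * \<phi> u" for n u
  proof (induction n)
    case 0 then show ?case using \<phi>0 by simp
  next
    case (Suc n)
    have "L (real (Suc n) * u) = hmult (L u) (L (real n * u))"
      by (simp add: op algebra_simps)
    then have "\<phi> (real (Suc n) * u) \<le> \<phi> u + \<phi> (real n * u)"
      unfolding \<phi>_def by (simp add: act_mult act_comp_disp)
    also have "\<dots> \<le> \<phi> u + real n * \<phi> u" using Suc by simp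
    finally show ?case by (simp add: algebra_simps)
  qed
  show "norm (act (L t) \<xi> - \<xi>) \<le> (1 + \<bar>t\<bar> / exp a) * delta1 act L a \<xi>"
  proof (cases "t = 0")
    case True then show ?thesis using \<phi>0 d0 unfolding \<phi>_def by simp
  next
    case False
    define n where "n = nat \<lceil>\<bar>t\<bar> / exp a\<rceil>"
    have pos: "\<bar>t\<bar> / exp a > 0" using False by simp
    have cc: "real n = real_of_int \<lceil>\<bar>t\<bar> / exp a\<rceil>" unfolding n_def using pos by simp
    have n1: "real n \<ge> \<bar>t\<bar> / exp a" unfolding cc by (rule le_of_int_ceiling)
    have n2: "real n \<le> \<bar>t\<bar> / exp a + 1" unfolding cc using ceiling_correct[of "\<bar>t\<bar> / exp a"] by linarith
    have npos: "real n > 0" using n1 pos by linarith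
    define u where "u = t / real n"
    have tu: "t = real n * u" unfolding u_def using npos by simp
    have "\<bar>u\<bar> = \<bar>t\<bar> / real n" unfolding u_def by simp
    also have "\<dots> \<le> exp a" using n1 npos by (simp add: field_simps)
    finally have ub: "\<bar>u\<bar> \<le> exp a" .
    have "\<phi> t \<le> real n * \<phi> u" unfolding tu by (rule iter)
    also have "\<dots> \<le> real n * delta1 act L a \<xi>" using up[OF ub] npos by simp
    also have "\<dots> \<le> (1 + \<bar>t\<bar> / exp a) * delta1 act L a \<xi>" using n2 d0 by (intro mult_right_mono) auto
    finally show ?thesis unfolding \<phi>_def .
  qed
qed

end




lemma ndw_int: "\<sigma> > 0 \<Longrightarrow> integrable lborel (\<lambda>x. normal_density 0 \<sigma> x * (1 + x\<^sup>2))"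
proof -
  assume s: "\<sigma> > 0"
  have "integrable lborel (\<lambda>x. normal_density 0 \<sigma> x + normal_density 0 \<sigma> x * \<bar>x - 0\<bar>^2)"
    by (intro Bochner_Integration.integrable_add integrable_normal_density nd_int_lb s)
  then show ?thesis by (simp add: algebra_simps)
qed

lemma fubG:
  fixes f :: "real \<Rightarrow> real \<Rightarrow> real \<Rightarrow> real \<Rightarrow> 'e::banach"
  assumes s1: "\<sigma>1 > 0" and s2: "\<sigma>2 > 0" and s3: "\<sigma>3 > 0" and s4: "\<sigma>4 > 0" and K0: "K \<ge> 0"
    and fc: "continuous_on UNIV (\<lambda>(x1,x2,x3,x4). f x1 x2 x3 x4)"
    and dom: "\<And>x1 x2 x3 x4. norm (f x1 x2 x3 x4) \<le> (K * (normal_density 0 \<sigma>1 x1 * (1 + x1\<^sup>2)))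
       * (normal_density 0 \<sigma>2 x2 * (1 + x2\<^sup>2)) * (normal_density 0 \<sigma>3 x3 * (1 + x3\<^sup>2)) * (normal_density 0 \<sigma>4 x4 * (1 + x4\<^sup>2))"
  shows "(\<lambda>(x1,x2,x3,x4). f x1 x2 x3 x4) integrable_on UNIV"
    and "integral UNIV (\<lambda>(x1,x2,x3,x4). f x1 x2 x3 x4) = it4 f"
    and "fubok f"
proof -
  have c: "continuous_on UNIV (\<lambda>x. normal_density 0 \<sigma> x * (1 + x\<^sup>2))" if "\<sigma> > 0" for \<sigma>
    by (intro continuous_intros continuous_on_mult nd_cont that)
  have c1: "continuous_on UNIV (\<lambda>x. K * (normal_density 0 \<sigma>1 x * (1 + x\<^sup>2)))"
    by (intro continuous_intros c s1)
  have i1: "integrable lborel (\<lambda>x. K * (normal_density 0 \<sigma>1 x * (1 + x\<^sup>2)))"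
    by (intro Bochner_Integration.integrable_mult_right ndw_int s1)
  have n0: "\<And>x. 0 \<le> normal_density 0 \<sigma> x * (1 + x\<^sup>2)" for \<sigma> by simp
  note F = fub4[OF fc c1 c[OF s2] c[OF s3] i1 ndw_int[OF s2] ndw_int[OF s3] ndw_int[OF s4]
      _ n0 n0 n0 dom]
  have "\<And>x. 0 \<le> K * (normal_density 0 \<sigma>1 x * (1 + x\<^sup>2))" using K0 by simp
  note F = F[OF this]
  show "(\<lambda>(x1,x2,x3,x4). f x1 x2 x3 x4) integrable_on UNIV" by (rule F(1))
  show "integral UNIV (\<lambda>(x1,x2,x3,x4). f x1 x2 x3 x4) = it4 f" by (rule F(2))
  show "fubok f" unfolding fubok_def using F(3-6) by blast
qed

lemma abs_le_sq1: "\<bar>x::real\<bar> \<le> 1 + x\<^sup>2"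
proof -
  have "0 \<le> (\<bar>x\<bar> - 1)\<^sup>2" by simp
  also have "(\<bar>x\<bar> - 1)\<^sup>2 = x\<^sup>2 - 2 * \<bar>x\<bar> + 1" by (simp add: power2_diff)
  finally show ?thesis using zero_le_power2[of x] by linarith
qed

lemma ge1_mult: "1 \<le> a \<Longrightarrow> 1 \<le> b \<Longrightarrow> 1 \<le> (a::real) * b"
  using mult_mono[of 1 a 1 b] by simp

lemma le_mult_ge1: "0 \<le> a \<Longrightarrow> 1 \<le> b \<Longrightarrow> a \<le> (a::real) * b"
  using mult_left_mono[of 1 b a] by simp

lemma poly9:
  fixes x1 x2 x3 x4 :: real
  shows "1 + \<bar>x1\<bar> + \<bar>x2\<bar> + \<bar>x3\<bar> + \<bar>x4\<bar> + \<bar>x1\<bar> * \<bar>x2\<bar> + 2 * \<bar>x1\<bar> * \<bar>x3\<bar> + x1\<^sup>2 * \<bar>x2\<bar>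
     \<le> 9 * ((1 + x1\<^sup>2) * (1 + x2\<^sup>2) * (1 + x3\<^sup>2) * (1 + x4\<^sup>2))"
proof -
  define u1 u2 u3 u4 where "u1 = 1 + x1\<^sup>2" "u2 = 1 + x2\<^sup>2" "u3 = 1 + x3\<^sup>2" "u4 = 1 + x4\<^sup>2"
  have g: "u1 \<ge> 1" "u2 \<ge> 1" "u3 \<ge> 1" "u4 \<ge> 1" unfolding u1_u2_u3_u4_def by auto
  have a: "\<bar>x1\<bar> \<le> u1" "\<bar>x2\<bar> \<le> u2" "\<bar>x3\<bar> \<le> u3" "\<bar>x4\<bar> \<le> u4" "x1\<^sup>2 \<le> u1"
    unfolding u1_u2_u3_u4_def by (auto simp: abs_le_sq1)
  define P where "P = u1 * u2 * u3 * u4"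
  have g12: "1 \<le> u1 * u2" and g34: "1 \<le> u3 * u4" and g24: "1 \<le> u2 * u4" using g by (auto intro: ge1_mult)
  have p12: "u1 * u2 \<le> P" unfolding P_def using le_mult_ge1[of "u1 * u2" "u3 * u4"] g g34 by (simp add: mult_ac)
  have p13: "u1 * u3 \<le> P" unfolding P_def using le_mult_ge1[of "u1 * u3" "u2 * u4"] g g24 by (simp add: mult_ac)
  have p1: "u1 \<le> u1 * u2" "u2 \<le> u1 * u2" "u3 \<le> u1 * u3"
    using le_mult_ge1[of u1 u2] le_mult_ge1[of u2 u1] le_mult_ge1[of u3 u1] g by (simp_all add: mult_ac)
  have p4: "u4 \<le> P" unfolding P_def using le_mult_ge1[of u4 "u1 * u2 * u3"] g g12 ge1_mult[OF g12 g(3)]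
    by (simp add: mult_ac)
  have one: "1 \<le> P" unfolding P_def using ge1_mult[OF ge1_mult[OF g12 g(3)] g(4)] by simp
  have t1: "\<bar>x1\<bar> * \<bar>x2\<bar> \<le> u1 * u2" using a by (intro mult_mono) auto
  have t2: "\<bar>x1\<bar> * \<bar>x3\<bar> \<le> u1 * u3" using a by (intro mult_mono) auto
  have t3: "x1\<^sup>2 * \<bar>x2\<bar> \<le> u1 * u2" using a by (intro mult_mono) auto
  have "1 + \<bar>x1\<bar> + \<bar>x2\<bar> + \<bar>x3\<bar> + \<bar>x4\<bar> + \<bar>x1\<bar> * \<bar>x2\<bar> + 2 * \<bar>x1\<bar> * \<bar>x3\<bar> + x1\<^sup>2 * \<bar>x2\<bar> \<le> 9 * P"
    using a t1 t2 t3 p12 p13 p1 p4 one by linarith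
  then show ?thesis unfolding P_def u1_u2_u3_u4_def .
qed




lemma G1: "hmult (hY s1) (hmult (hW s2) (hmult (hZ s3) (hX s4))) = (s1, s2, s3, s4)"
  by (simp add: hmult_def hY_def hW_def hZ_def hX_def)

lemma G2: "hmult (hX s4) (hmult (hZ s3) (hmult (hW s2) (hY s1))) = (s1, s2 + s4 * s1, s3 + 2 * s4 * s2 + s4\<^sup>2 * s1, s4)"
  by (simp add: hmult_def hY_def hW_def hZ_def hX_def)

lemma GZ: "(y, w, z, x) = hmult (y, w, 0, x) (hZ z)"
  by (simp add: hmult_def hZ_def)

lemma GW: "(y, w, z, x) = hmult (y, 0, z, x) (hmult (hW w) (hZ (- 2 * x * w)))"
  by (simp add: hmult_def hW_def hZ_def)

lemma gd_cont: "continuous_on S f \<Longrightarrow> continuous_on S (\<lambda>z. gdens a (f z))"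
  unfolding gdens_def normal_density_def by (intro continuous_intros) auto

lemma gd_nonneg: "0 \<le> gdens a t" by (simp add: gdens_def)

definition "NUf act a b c d \<xi> s1 s2 s3 s4 = (gdens a s1 * gdens b s2 * gdens c s3 * gdens d s4) *\<^sub>R act (hmult (hY s1) (hmult (hW s2) (hmult (hZ s3) (hX s4)))) \<xi>"
definition "IF1 act a b c d \<xi> x1 x2 x3 x4 = (gdens d x1 * gdens c x4 * gdens b x3 * gdens a x2) *\<^sub>R act (x2, x3 + x1 * x2, x4 + 2 * x1 * x3 + x1\<^sup>2 * x2, x1) \<xi>"
definition "IH1 act a b c d \<xi> x1 x2 x3 x4 = (gdens d x1 * gdens c x4 * gdens b x3 * gdens a x2) *\<^sub>R act (x2, x3 + x1 * x2, x4, x1) \<xi>"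
definition "IH2 act a b c d \<xi> x1 x2 x3 x4 = (gdens d x1 * gdens c x3 * gdens b x4 * gdens a x2) *\<^sub>R act (x2, x4 + x1 * x2, x3, x1) \<xi>"
definition "IH3 act a b c d \<xi> x1 x2 x3 x4 = (gdens d x1 * gdens c x3 * gdens b x4 * gdens a x2) *\<^sub>R act (x2, x4, x3, x1) \<xi>"
definition "IG0 a b c d (\<xi>::'e::real_normed_vector) x1 x2 x3 x4 = (gdens d x1 * gdens c x4 * gdens b x3 * gdens a x2) *\<^sub>R \<xi>"
definition "IG3 a b c d (\<xi>::'e::real_normed_vector) x1 x2 x3 x4 = (gdens d x1 * gdens c x3 * gdens b x4 * gdens a x2) *\<^sub>R \<xi>"

lemma q_int:
  "(\<lambda>x. gdens s x * (1 + \<bar>x\<bar> / exp s)) integrable_on UNIV"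
  "integral UNIV (\<lambda>x. gdens s x * (1 + \<bar>x\<bar> / exp s)) \<le> 2"
  "(\<lambda>x. gdens s x * (1 + (x / exp s)\<^sup>2)) integrable_on UNIV"
  "integral UNIV (\<lambda>x. gdens s x * (1 + (x / exp s)\<^sup>2)) = 2"
  "gdens s integrable_on UNIV" "integral UNIV (gdens s) = 1"
proof -
  have e: "exp s > 0" by simp
  have i0: "(\<lambda>x. normal_density 0 (exp s) x) integrable_on UNIV" using nd_int0[OF e] by simp
  have i1: "(\<lambda>x. normal_density 0 (exp s) x * \<bar>x\<bar>) integrable_on UNIV" using nd_int1[OF e, of 0] by simp
  have i2: "(\<lambda>x. normal_density 0 (exp s) x * x\<^sup>2) integrable_on UNIV" using nd_int2[OF e, of 0] by simp
  have I0: "integral UNIV (\<lambda>x. normal_density 0 (exp s) x) = 1" using nd_I0[OF e, of 0] by simp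
  have I1: "integral UNIV (\<lambda>x. normal_density 0 (exp s) x * \<bar>x\<bar>) \<le> exp s" using nd_I1_le[OF e, of 0] by simp
  have I2: "integral UNIV (\<lambda>x. normal_density 0 (exp s) x * x\<^sup>2) = (exp s)\<^sup>2" using nd_I2[OF e, of 0] by simp
  have eq1: "(\<lambda>x. gdens s x * (1 + \<bar>x\<bar> / exp s)) = (\<lambda>x. normal_density 0 (exp s) x + (1 / exp s) * (normal_density 0 (exp s) x * \<bar>x\<bar>))"
    by (auto simp: gdens_def field_simps)
  have eq2: "(\<lambda>x. gdens s x * (1 + (x / exp s)\<^sup>2)) = (\<lambda>x. normal_density 0 (exp s) x + (1 / (exp s)\<^sup>2) * (normal_density 0 (exp s) x * x\<^sup>2))"
    by (auto simp: gdens_def field_simps power_divide)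
  show "(\<lambda>x. gdens s x * (1 + \<bar>x\<bar> / exp s)) integrable_on UNIV"
    unfolding eq1 by (intro integrable_add integrable_on_mult_right i0 i1)
  show "(\<lambda>x. gdens s x * (1 + (x / exp s)\<^sup>2)) integrable_on UNIV"
    unfolding eq2 by (intro integrable_add integrable_on_mult_right i0 i2)
  have "integral UNIV (\<lambda>x. gdens s x * (1 + \<bar>x\<bar> / exp s)) = 1 + (1 / exp s) * integral UNIV (\<lambda>x. normal_density 0 (exp s) x * \<bar>x\<bar>)"
    unfolding eq1 by (simp add: integral_add integrable_on_mult_right i0 i1 I0)
  also have "\<dots> \<le> 1 + (1 / exp s) * exp s" using I1 by (intro add_left_mono mult_left_mono) auto
  finally show "integral UNIV (\<lambda>x. gdens s x * (1 + \<bar>x\<bar> / exp s)) \<le> 2" by simp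
  have "integral UNIV (\<lambda>x. gdens s x * (1 + (x / exp s)\<^sup>2)) = 1 + (1 / (exp s)\<^sup>2) * (exp s)\<^sup>2"
    unfolding eq2 by (simp add: integral_add integrable_on_mult_right i0 i2 I0 I2)
  then show "integral UNIV (\<lambda>x. gdens s x * (1 + (x / exp s)\<^sup>2)) = 2" by simp
  show "gdens s integrable_on UNIV" using i0 by (simp add: gdens_def[abs_def])
  show "integral UNIV (gdens s) = 1" using I0 by (simp add: gdens_def[abs_def])
qed

lemma Tbound:
  fixes x1 x2 x3 sa sb sc sd :: real
  assumes pos: "sa > 0" "sb > 0" "sc > 0" "sd > 0" and al: "sa * sd / sb \<le> 1"
  shows "\<bar>2 * x1 * x3 + x1\<^sup>2 * x2\<bar> / sc \<le> 3 * (sb * sd / sc) * ((1 + (x1 / sd)\<^sup>2) * (1 + \<bar>x2\<bar> / sa) * (1 + \<bar>x3\<bar> / sb))"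
proof -
  define v1 v2 v3 where "v1 = \<bar>x1\<bar> / sd" "v2 = \<bar>x2\<bar> / sa" "v3 = \<bar>x3\<bar> / sb"
  have v0: "v1 \<ge> 0" "v2 \<ge> 0" "v3 \<ge> 0" unfolding v1_v2_v3_def using pos by auto
  have x: "\<bar>x1\<bar> = sd * v1" "\<bar>x2\<bar> = sa * v2" "\<bar>x3\<bar> = sb * v3" unfolding v1_v2_v3_def using pos by auto
  have sq: "(x1 / sd)\<^sup>2 = v1\<^sup>2" unfolding v1_v2_v3_def by (simp add: power_divide)
  have "\<bar>2 * x1 * x3 + x1\<^sup>2 * x2\<bar> \<le> 2 * \<bar>x1\<bar> * \<bar>x3\<bar> + \<bar>x1\<bar>\<^sup>2 * \<bar>x2\<bar>"
    using abs_triangle_ineq[of "2 * x1 * x3" "x1\<^sup>2 * x2"] by (simp add: abs_mult)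
  also have "\<dots> = (sb * sd) * (2 * v1 * v3) + (sb * sd) * ((sa * sd / sb) * (v1\<^sup>2 * v2))"
    unfolding x using pos by (simp add: field_simps power2_eq_square)
  also have "\<dots> \<le> (sb * sd) * (2 * v1 * v3) + (sb * sd) * (1 * (v1\<^sup>2 * v2))"
    using al pos v0 by (intro add_left_mono mult_left_mono mult_right_mono) auto
  also have "\<dots> = (sb * sd) * (2 * v1 * v3 + v1\<^sup>2 * v2)" by (simp add: algebra_simps)
  also have "\<dots> \<le> (sb * sd) * (3 * ((1 + v1\<^sup>2) * (1 + v2) * (1 + v3)))"
  proof -
    have a1: "v1 \<le> 1 + v1\<^sup>2" using abs_le_sq1[of v1] v0 by simp
    have p: "1 \<le> (1 + v2) * (1 + v3)" using v0 by (intro ge1_mult) auto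
    have "v1 * v3 \<le> (1 + v1\<^sup>2) * (1 + v3)" using a1 v0 by (intro mult_mono) auto
    also have "\<dots> \<le> (1 + v1\<^sup>2) * ((1 + v2) * (1 + v3))"
      using v0 le_mult_ge1[of "1 + v3" "1 + v2"] by (intro mult_left_mono) (auto simp: mult_ac)
    finally have b1: "v1 * v3 \<le> (1 + v1\<^sup>2) * (1 + v2) * (1 + v3)" by (simp add: mult_ac)
    have "v1\<^sup>2 * v2 \<le> (1 + v1\<^sup>2) * (1 + v2)" using v0 by (intro mult_mono) auto
    also have "\<dots> \<le> (1 + v1\<^sup>2) * (1 + v2) * (1 + v3)" using v0 le_mult_ge1[of "(1 + v1\<^sup>2) * (1 + v2)" "1 + v3"] by auto
    finally have b2: "v1\<^sup>2 * v2 \<le> (1 + v1\<^sup>2) * (1 + v2) * (1 + v3)" .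
    have "2 * v1 * v3 + v1\<^sup>2 * v2 \<le> 3 * ((1 + v1\<^sup>2) * (1 + v2) * (1 + v3))" using b1 b2 by linarith
    then show ?thesis using pos by (intro mult_left_mono) auto
  qed
  finally have "\<bar>2 * x1 * x3 + x1\<^sup>2 * x2\<bar> \<le> (sb * sd) * (3 * ((1 + v1\<^sup>2) * (1 + v2) * (1 + v3)))" .
  then have "\<bar>2 * x1 * x3 + x1\<^sup>2 * x2\<bar> / sc \<le> (sb * sd) * (3 * ((1 + v1\<^sup>2) * (1 + v2) * (1 + v3))) / sc"
    using pos by (intro divide_right_mono) auto
  also have "\<dots> = 3 * (sb * sd / sc) * ((1 + (x1 / sd)\<^sup>2) * (1 + \<bar>x2\<bar> / sa) * (1 + \<bar>x3\<bar> / sb))"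
    unfolding sq v1_v2_v3_def by simp
  finally show ?thesis .
qed

lemma T2bound:
  fixes x1 x2 sa sb sc sd :: real
  assumes pos: "sa > 0" "sb > 0" "sc > 0" "sd > 0" and be: "sb * sd / sc \<le> 1"
  shows "(\<bar>x1\<bar> * \<bar>x2\<bar> / sb) * (3 + 2 * \<bar>x1\<bar> * sb / sc) \<le> 5 * (sa * sd / sb) * ((1 + (x1 / sd)\<^sup>2) * (1 + \<bar>x2\<bar> / sa))"
proof -
  define v1 v2 where "v1 = \<bar>x1\<bar> / sd" "v2 = \<bar>x2\<bar> / sa"
  have v0: "v1 \<ge> 0" "v2 \<ge> 0" unfolding v1_v2_def using pos by auto
  have x: "\<bar>x1\<bar> = sd * v1" "\<bar>x2\<bar> = sa * v2" unfolding v1_v2_def using pos by auto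
  have sq: "(x1 / sd)\<^sup>2 = v1\<^sup>2" unfolding v1_v2_def by (simp add: power_divide)
  have e1: "\<bar>x1\<bar> * \<bar>x2\<bar> / sb = (sa * sd / sb) * (v1 * v2)" unfolding x using pos by (simp add: field_simps)
  have e2: "2 * \<bar>x1\<bar> * sb / sc = 2 * (sb * sd / sc) * v1" unfolding x using pos by (simp add: field_simps)
  have "2 * (sb * sd / sc) * v1 \<le> 2 * 1 * v1" using be v0 by (intro mult_right_mono mult_left_mono) auto
  then have "3 + 2 * \<bar>x1\<bar> * sb / sc \<le> 3 + 2 * v1" unfolding e2 by simp
  then have "(\<bar>x1\<bar> * \<bar>x2\<bar> / sb) * (3 + 2 * \<bar>x1\<bar> * sb / sc) \<le> (sa * sd / sb) * (v1 * v2) * (3 + 2 * v1)"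
    unfolding e1 using pos v0 by (intro mult_left_mono) auto
  also have "\<dots> = (sa * sd / sb) * (v2 * (3 * v1 + 2 * v1\<^sup>2))" by (simp add: algebra_simps power2_eq_square add_divide_distrib)
  also have "\<dots> \<le> (sa * sd / sb) * ((1 + v2) * (5 * (1 + v1\<^sup>2)))"
  proof -
    have "3 * v1 + 2 * v1\<^sup>2 \<le> 5 * (1 + v1\<^sup>2)" using abs_le_sq1[of v1] v0 by simp
    then show ?thesis using pos v0 by (intro mult_left_mono mult_mono) auto
  qed
  also have "\<dots> = 5 * (sa * sd / sb) * ((1 + (x1 / sd)\<^sup>2) * (1 + \<bar>x2\<bar> / sa))"
    unfolding sq v1_v2_def by (simp add: mult_ac)
  finally show ?thesis .
qed

context
  fixes act :: "H \<Rightarrow> 'e::banach \<Rightarrow> 'e" and a b c d :: real and \<xi> :: 'e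
  assumes CA: "cont_affine_isometric_action act"
begin

abbreviation "dY \<equiv> delta1 act hY a \<xi>"
abbreviation "dW \<equiv> delta1 act hW b \<xi>"
abbreviation "dZ \<equiv> delta1 act hZ c \<xi>"
abbreviation "dX \<equiv> delta1 act hX d \<xi>"
abbreviation "DD \<equiv> delta4 act a b c d \<xi>"

lemmas dispY = disp[OF CA one_param(1) one_param(5) one_param_cont(1)]
lemmas dispW = disp[OF CA one_param(2) one_param(6) one_param_cont(2)]
lemmas dispZ = disp[OF CA one_param(3) one_param(7) one_param_cont(3)]
lemmas dispX = disp[OF CA one_param(4) one_param(8) one_param_cont(4)]

lemma dle: "0 \<le> dY" "0 \<le> dW" "0 \<le> dZ" "0 \<le> dX" "dY \<le> DD" "dW \<le> DD" "dZ \<le> DD" "dX \<le> DD" "0 \<le> DD"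
  using dispY(1)[of a \<xi>] dispW(1)[of b \<xi>] dispZ(1)[of c \<xi>] dispX(1)[of d \<xi>]
  by (auto simp: delta4_def)

lemma cdm: "norm (act (hmult g h) \<xi> - \<xi>) \<le> norm (act g \<xi> - \<xi>) + norm (act h \<xi> - \<xi>)"
  unfolding act_mult[OF CA] by (rule act_comp_disp[OF CA])

lemma cdm3: "norm (act (hmult g1 (hmult g2 (hmult g3 g4))) \<xi> - \<xi>) \<le>
    norm (act g1 \<xi> - \<xi>) + (norm (act g2 \<xi> - \<xi>) + (norm (act g3 \<xi> - \<xi>) + norm (act g4 \<xi> - \<xi>)))"
proof -
  have "norm (act (hmult g1 (hmult g2 (hmult g3 g4))) \<xi> - \<xi>) \<le> norm (act g1 \<xi> - \<xi>) + norm (act (hmult g2 (hmult g3 g4)) \<xi> - \<xi>)"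
    by (rule cdm)
  also have "norm (act (hmult g2 (hmult g3 g4)) \<xi> - \<xi>) \<le> norm (act g2 \<xi> - \<xi>) + norm (act (hmult g3 g4) \<xi> - \<xi>)"
    by (rule cdm)
  also have "norm (act (hmult g3 g4) \<xi> - \<xi>) \<le> norm (act g3 \<xi> - \<xi>) + norm (act g4 \<xi> - \<xi>)"
    by (rule cdm)
  finally show ?thesis by simp
qed

lemma Fdisp: "norm (act (y, w, z, x) \<xi> - \<xi>) \<le>
   (1 + \<bar>y\<bar> / exp a) * dY + (1 + \<bar>w\<bar> / exp b) * dW + (1 + \<bar>z\<bar> / exp c) * dZ + (1 + \<bar>x\<bar> / exp d) * dX"
proof -
  have "norm (act (y, w, z, x) \<xi> - \<xi>) \<le> norm (act (hY y) \<xi> - \<xi>) + (norm (act (hW w) \<xi> - \<xi>) +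
      (norm (act (hZ z) \<xi> - \<xi>) + norm (act (hX x) \<xi> - \<xi>)))"
    unfolding G1[symmetric] by (rule cdm3)
  then show ?thesis using dispY(2)[where t=y and a=a and \<xi>=\<xi>] dispW(2)[where t=w and a=b and \<xi>=\<xi>]
      dispZ(2)[where t=z and a=c and \<xi>=\<xi>] dispX(2)[where t=x and a=d and \<xi>=\<xi>]
    by linarith
qed

lemma Fdisp2: "norm (act (hmult (hX x) (hmult (hZ z) (hmult (hW w) (hY y)))) \<xi> - \<xi>) \<le>
   (1 + \<bar>y\<bar> / exp a) * dY + (1 + \<bar>w\<bar> / exp b) * dW + (1 + \<bar>z\<bar> / exp c) * dZ + (1 + \<bar>x\<bar> / exp d) * dX"
proof -
  have "norm (act (hmult (hX x) (hmult (hZ z) (hmult (hW w) (hY y)))) \<xi> - \<xi>) \<le> norm (act (hX x) \<xi> - \<xi>) + (norm (act (hZ z) \<xi> - \<xi>) +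
      (norm (act (hW w) \<xi> - \<xi>) + norm (act (hY y) \<xi> - \<xi>)))"
    by (rule cdm3)
  then show ?thesis using dispY(2)[where t=y and a=a and \<xi>=\<xi>] dispW(2)[where t=w and a=b and \<xi>=\<xi>]
      dispZ(2)[where t=z and a=c and \<xi>=\<xi>] dispX(2)[where t=x and a=d and \<xi>=\<xi>]
    by linarith
qed

definition "K0 = norm \<xi> + DD * (4 + 1 / exp a + 1 / exp b + 1 / exp c + 1 / exp d)"

lemma K0_nonneg: "0 \<le> K0" unfolding K0_def using dle by simp

lemma Fbound: "norm (act (y, w, z, x) \<xi>) \<le> K0 * (1 + \<bar>y\<bar> + \<bar>w\<bar> + \<bar>z\<bar> + \<bar>x\<bar>)"
proof -
  have "norm (act (y, w, z, x) \<xi>) \<le> norm \<xi> + norm (act (y, w, z, x) \<xi> - \<xi>)"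
    by (metis add.commute norm_triangle_sub)
  also have "\<dots> \<le> norm \<xi> + ((1 + \<bar>y\<bar> / exp a) * DD + (1 + \<bar>w\<bar> / exp b) * DD + (1 + \<bar>z\<bar> / exp c) * DD + (1 + \<bar>x\<bar> / exp d) * DD)"
  proof -
    have "(1 + \<bar>y\<bar> / exp a) * dY \<le> (1 + \<bar>y\<bar> / exp a) * DD" using dle by (intro mult_left_mono) auto
    moreover have "(1 + \<bar>w\<bar> / exp b) * dW \<le> (1 + \<bar>w\<bar> / exp b) * DD" using dle by (intro mult_left_mono) auto
    moreover have "(1 + \<bar>z\<bar> / exp c) * dZ \<le> (1 + \<bar>z\<bar> / exp c) * DD" using dle by (intro mult_left_mono) auto
    moreover have "(1 + \<bar>x\<bar> / exp d) * dX \<le> (1 + \<bar>x\<bar> / exp d) * DD" using dle by (intro mult_left_mono) auto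
    ultimately show ?thesis using Fdisp[of y w z x] by linarith
  qed
  also have "\<dots> = norm \<xi> + DD * 4 + (DD / exp a) * \<bar>y\<bar> + (DD / exp b) * \<bar>w\<bar> + (DD / exp c) * \<bar>z\<bar> + (DD / exp d) * \<bar>x\<bar>"
    by (simp add: algebra_simps)
  also have "\<dots> \<le> K0 * (1 + \<bar>y\<bar> + \<bar>w\<bar> + \<bar>z\<bar> + \<bar>x\<bar>)"
  proof -
    have k1: "norm \<xi> + DD * 4 \<le> K0" unfolding K0_def using dle by (simp add: algebra_simps)
    have pe: "0 < 1 / exp a" "0 < 1 / exp b" "0 < 1 / exp c" "0 < 1 / exp d" by auto
    have k: "DD / exp s \<le> K0" if "s \<in> {a, b, c, d}" for s
    proof -
      have "1 / exp s \<le> 4 + 1 / exp a + 1 / exp b + 1 / exp c + 1 / exp d"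
        using that pe by auto
      then have "DD * (1 / exp s) \<le> DD * (4 + 1 / exp a + 1 / exp b + 1 / exp c + 1 / exp d)"
        using dle by (intro mult_left_mono) auto
      then have "DD / exp s \<le> DD * (4 + 1 / exp a + 1 / exp b + 1 / exp c + 1 / exp d)" by simp
      moreover have "0 \<le> norm \<xi>" by simp
      ultimately show ?thesis unfolding K0_def by linarith
    qed
    have "(DD / exp a) * \<bar>y\<bar> \<le> K0 * \<bar>y\<bar>" using k[of a] by (intro mult_right_mono) auto
    moreover have "(DD / exp b) * \<bar>w\<bar> \<le> K0 * \<bar>w\<bar>" using k[of b] by (intro mult_right_mono) auto
    moreover have "(DD / exp c) * \<bar>z\<bar> \<le> K0 * \<bar>z\<bar>" using k[of c] by (intro mult_right_mono) auto
    moreover have "(DD / exp d) * \<bar>x\<bar> \<le> K0 * \<bar>x\<bar>" using k[of d] by (intro mult_right_mono) auto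
    ultimately show ?thesis using k1 by (simp add: algebra_simps)
  qed
  finally show ?thesis .
qed

lemma orbit_cont: "continuous_on UNIV \<phi> \<Longrightarrow> continuous_on UNIV (\<lambda>z. act (\<phi> z) \<xi>)"
  using continuous_on_compose2[OF act_cont[OF CA, of \<xi>]] by auto


lemma dom_helper:
  assumes "0 \<le> r" "1 + \<bar>y\<bar> + \<bar>w\<bar> + \<bar>z\<bar> + \<bar>x\<bar> \<le> S"
  shows "norm (r *\<^sub>R act (y, w, z, x) \<xi>) \<le> r * (K0 * S)"
proof -
  have "norm (r *\<^sub>R act (y, w, z, x) \<xi>) = r * norm (act (y, w, z, x) \<xi>)" using assms by simp
  also have "\<dots> \<le> r * (K0 * (1 + \<bar>y\<bar> + \<bar>w\<bar> + \<bar>z\<bar> + \<bar>x\<bar>))" using assms Fbound by (intro mult_left_mono) auto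
  also have "\<dots> \<le> r * (K0 * S)" using assms K0_nonneg by (intro mult_left_mono) auto
  finally show ?thesis .
qed

lemma tri1: "\<bar>x3 + x1 * x2\<bar> \<le> \<bar>x3\<bar> + \<bar>x1\<bar> * \<bar>x2\<bar>" for x1 x2 x3 :: real
  by (metis abs_mult abs_triangle_ineq)

lemma tri2: "\<bar>x4 + 2 * x1 * x3 + x1\<^sup>2 * x2\<bar> \<le> \<bar>x4\<bar> + 2 * \<bar>x1\<bar> * \<bar>x3\<bar> + x1\<^sup>2 * \<bar>x2\<bar>" for x1 x2 x3 x4 :: real
proof -
  have "\<bar>x4 + 2 * x1 * x3 + x1\<^sup>2 * x2\<bar> \<le> \<bar>x4 + 2 * x1 * x3\<bar> + \<bar>x1\<^sup>2 * x2\<bar>" by (rule abs_triangle_ineq)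
  also have "\<bar>x4 + 2 * x1 * x3\<bar> \<le> \<bar>x4\<bar> + \<bar>2 * x1 * x3\<bar>" by (rule abs_triangle_ineq)
  finally show ?thesis by (simp add: abs_mult)
qed

abbreviation "PP x1 x2 x3 x4 \<equiv> 9 * ((1 + x1\<^sup>2) * (1 + x2\<^sup>2) * (1 + x3\<^sup>2) * (1 + (x4::real)\<^sup>2))"

lemma PP_bounds:
  "1 + \<bar>x2\<bar> + \<bar>x3 + x1 * x2\<bar> + \<bar>x4 + 2 * x1 * x3 + x1\<^sup>2 * x2\<bar> + \<bar>x1\<bar> \<le> PP x1 x2 x3 x4"
  "1 + \<bar>x2\<bar> + \<bar>x3 + x1 * x2\<bar> + \<bar>x4\<bar> + \<bar>x1\<bar> \<le> PP x1 x2 x3 x4"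
  "1 + \<bar>x2\<bar> + \<bar>x4 + x1 * x2\<bar> + \<bar>x3\<bar> + \<bar>x1\<bar> \<le> PP x1 x2 x3 x4"
  "1 + \<bar>x2\<bar> + \<bar>x4\<bar> + \<bar>x3\<bar> + \<bar>x1\<bar> \<le> PP x1 x2 x3 x4"
  "1 + \<bar>x1\<bar> + \<bar>x2\<bar> + \<bar>x3\<bar> + \<bar>x4\<bar> \<le> PP x1 x2 x3 x4"
  "1 \<le> PP x1 x2 x3 x4"
  for x1 x2 x3 x4 :: real
proof -
  note p = poly9[of x1 x2 x3 x4]
  have n: "0 \<le> \<bar>x1\<bar> * \<bar>x2\<bar>" "0 \<le> \<bar>x1\<bar> * \<bar>x3\<bar>" "0 \<le> x1\<^sup>2 * \<bar>x2\<bar>" by auto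
  have t3: "\<bar>x4 + x1 * x2\<bar> \<le> \<bar>x4\<bar> + \<bar>x1\<bar> * \<bar>x2\<bar>" by (rule tri1)
  show "1 + \<bar>x2\<bar> + \<bar>x3 + x1 * x2\<bar> + \<bar>x4 + 2 * x1 * x3 + x1\<^sup>2 * x2\<bar> + \<bar>x1\<bar> \<le> PP x1 x2 x3 x4"
    using p tri1[of x3 x1 x2] tri2[of x4 x1 x3 x2] by linarith
  show "1 + \<bar>x2\<bar> + \<bar>x3 + x1 * x2\<bar> + \<bar>x4\<bar> + \<bar>x1\<bar> \<le> PP x1 x2 x3 x4"
    using p tri1[of x3 x1 x2] n by linarith
  show "1 + \<bar>x2\<bar> + \<bar>x4 + x1 * x2\<bar> + \<bar>x3\<bar> + \<bar>x1\<bar> \<le> PP x1 x2 x3 x4"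
    using p t3 n by linarith
  show "1 + \<bar>x2\<bar> + \<bar>x4\<bar> + \<bar>x3\<bar> + \<bar>x1\<bar> \<le> PP x1 x2 x3 x4"
    using p n by linarith
  show "1 + \<bar>x1\<bar> + \<bar>x2\<bar> + \<bar>x3\<bar> + \<bar>x4\<bar> \<le> PP x1 x2 x3 x4"
    using p n by linarith
  show "1 \<le> PP x1 x2 x3 x4"
    using p n by linarith
qed

lemma K0_ge: "norm \<xi> \<le> K0" unfolding K0_def using dle by simp

lemma gd_eq: "gdens s t = normal_density 0 (exp s) t" by (simp add: gdens_def)

lemma rho_eq: "(r1 * r2 * r3 * r4) * (K * PP x1 x2 x3 x4) =
  (9 * K * (r1 * (1 + x1\<^sup>2))) * (r2 * (1 + x2\<^sup>2)) * (r3 * (1 + x3\<^sup>2)) * (r4 * (1 + (x4::real)\<^sup>2))"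
  by (simp add: mult_ac)

lemmas fubG' = fubG[OF exp_gt_zero exp_gt_zero exp_gt_zero exp_gt_zero]

lemma NU_fub:
  "(\<lambda>(x1,x2,x3,x4). NUf act a b c d \<xi> x1 x2 x3 x4) integrable_on UNIV"
proof -
  have K: "0 \<le> 9 * K0" using K0_nonneg by simp
  have c: "continuous_on UNIV (\<lambda>(x1,x2,x3,x4). NUf act a b c d \<xi> x1 x2 x3 x4)"
    unfolding unc4 NUf_def G1 by (intro continuous_intros gd_cont orbit_cont)
  have d: "norm (NUf act a b c d \<xi> x1 x2 x3 x4) \<le> (9 * K0 * (normal_density 0 (exp a) x1 * (1 + x1\<^sup>2))) *
      (normal_density 0 (exp b) x2 * (1 + x2\<^sup>2)) * (normal_density 0 (exp c) x3 * (1 + x3\<^sup>2)) *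
      (normal_density 0 (exp d) x4 * (1 + x4\<^sup>2))" for x1 x2 x3 x4
  proof -
    have "norm (NUf act a b c d \<xi> x1 x2 x3 x4) \<le> (gdens a x1 * gdens b x2 * gdens c x3 * gdens d x4) * (K0 * PP x1 x2 x3 x4)"
      unfolding NUf_def G1 by (rule dom_helper) (auto simp: gd_nonneg PP_bounds(5))
    then show ?thesis unfolding rho_eq gd_eq by simp
  qed
  show ?thesis by (rule fubG'(1)[OF K c d])
qed


lemma IF1_fub:
  "(\<lambda>(x1,x2,x3,x4). IF1 act a b c d \<xi> x1 x2 x3 x4) integrable_on UNIV"
  "integral UNIV (\<lambda>(x1,x2,x3,x4). IF1 act a b c d \<xi> x1 x2 x3 x4) = it4 (IF1 act a b c d \<xi>)"
  "fubok (IF1 act a b c d \<xi>)"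
proof -
  have K: "0 \<le> 9 * K0" using K0_nonneg by simp
  have c: "continuous_on UNIV (\<lambda>(x1,x2,x3,x4). IF1 act a b c d \<xi> x1 x2 x3 x4)"
    unfolding unc4 IF1_def by (intro continuous_intros gd_cont orbit_cont)
  have d: "norm (IF1 act a b c d \<xi> x1 x2 x3 x4) \<le> (9 * K0 * (normal_density 0 (exp d) x1 * (1 + x1\<^sup>2))) *
      (normal_density 0 (exp a) x2 * (1 + x2\<^sup>2)) * (normal_density 0 (exp b) x3 * (1 + x3\<^sup>2)) *
      (normal_density 0 (exp c) x4 * (1 + x4\<^sup>2))" for x1 x2 x3 x4
  proof -
    have "norm (IF1 act a b c d \<xi> x1 x2 x3 x4) \<le> (gdens d x1 * gdens a x2 * gdens b x3 * gdens c x4) * (K0 * PP x1 x2 x3 x4)"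
      proof -
      have "norm (IF1 act a b c d \<xi> x1 x2 x3 x4) \<le> (gdens d x1 * gdens c x4 * gdens b x3 * gdens a x2) * (K0 * PP x1 x2 x3 x4)"
        unfolding IF1_def by (rule dom_helper) (auto simp: gd_nonneg PP_bounds(1))
      then show ?thesis by (simp add: mult_ac)
    qed
    then show ?thesis unfolding rho_eq gd_eq by simp
  qed
  show "(\<lambda>(x1,x2,x3,x4). IF1 act a b c d \<xi> x1 x2 x3 x4) integrable_on UNIV" by (rule fubG'(1)[OF K c d])
  show "integral UNIV (\<lambda>(x1,x2,x3,x4). IF1 act a b c d \<xi> x1 x2 x3 x4) = it4 (IF1 act a b c d \<xi>)" by (rule fubG'(2)[OF K c d])
  show "fubok (IF1 act a b c d \<xi>)" by (rule fubG'(3)[OF K c d])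
qed

lemma IH1_fub:
  "(\<lambda>(x1,x2,x3,x4). IH1 act a b c d \<xi> x1 x2 x3 x4) integrable_on UNIV"
  "integral UNIV (\<lambda>(x1,x2,x3,x4). IH1 act a b c d \<xi> x1 x2 x3 x4) = it4 (IH1 act a b c d \<xi>)"
  "fubok (IH1 act a b c d \<xi>)"
proof -
  have K: "0 \<le> 9 * K0" using K0_nonneg by simp
  have c: "continuous_on UNIV (\<lambda>(x1,x2,x3,x4). IH1 act a b c d \<xi> x1 x2 x3 x4)"
    unfolding unc4 IH1_def by (intro continuous_intros gd_cont orbit_cont)
  have d: "norm (IH1 act a b c d \<xi> x1 x2 x3 x4) \<le> (9 * K0 * (normal_density 0 (exp d) x1 * (1 + x1\<^sup>2))) *
      (normal_density 0 (exp a) x2 * (1 + x2\<^sup>2)) * (normal_density 0 (exp b) x3 * (1 + x3\<^sup>2)) *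
      (normal_density 0 (exp c) x4 * (1 + x4\<^sup>2))" for x1 x2 x3 x4
  proof -
    have "norm (IH1 act a b c d \<xi> x1 x2 x3 x4) \<le> (gdens d x1 * gdens a x2 * gdens b x3 * gdens c x4) * (K0 * PP x1 x2 x3 x4)"
      proof -
      have "norm (IH1 act a b c d \<xi> x1 x2 x3 x4) \<le> (gdens d x1 * gdens c x4 * gdens b x3 * gdens a x2) * (K0 * PP x1 x2 x3 x4)"
        unfolding IH1_def by (rule dom_helper) (auto simp: gd_nonneg PP_bounds(2))
      then show ?thesis by (simp add: mult_ac)
    qed
    then show ?thesis unfolding rho_eq gd_eq by simp
  qed
  show "(\<lambda>(x1,x2,x3,x4). IH1 act a b c d \<xi> x1 x2 x3 x4) integrable_on UNIV" by (rule fubG'(1)[OF K c d])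
  show "integral UNIV (\<lambda>(x1,x2,x3,x4). IH1 act a b c d \<xi> x1 x2 x3 x4) = it4 (IH1 act a b c d \<xi>)" by (rule fubG'(2)[OF K c d])
  show "fubok (IH1 act a b c d \<xi>)" by (rule fubG'(3)[OF K c d])
qed

lemma IH2_fub:
  "(\<lambda>(x1,x2,x3,x4). IH2 act a b c d \<xi> x1 x2 x3 x4) integrable_on UNIV"
  "integral UNIV (\<lambda>(x1,x2,x3,x4). IH2 act a b c d \<xi> x1 x2 x3 x4) = it4 (IH2 act a b c d \<xi>)"
  "fubok (IH2 act a b c d \<xi>)"
proof -
  have K: "0 \<le> 9 * K0" using K0_nonneg by simp
  have c: "continuous_on UNIV (\<lambda>(x1,x2,x3,x4). IH2 act a b c d \<xi> x1 x2 x3 x4)"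
    unfolding unc4 IH2_def by (intro continuous_intros gd_cont orbit_cont)
  have d: "norm (IH2 act a b c d \<xi> x1 x2 x3 x4) \<le> (9 * K0 * (normal_density 0 (exp d) x1 * (1 + x1\<^sup>2))) *
      (normal_density 0 (exp a) x2 * (1 + x2\<^sup>2)) * (normal_density 0 (exp c) x3 * (1 + x3\<^sup>2)) *
      (normal_density 0 (exp b) x4 * (1 + x4\<^sup>2))" for x1 x2 x3 x4
  proof -
    have "norm (IH2 act a b c d \<xi> x1 x2 x3 x4) \<le> (gdens d x1 * gdens a x2 * gdens c x3 * gdens b x4) * (K0 * PP x1 x2 x3 x4)"
      proof -
      have "norm (IH2 act a b c d \<xi> x1 x2 x3 x4) \<le> (gdens d x1 * gdens c x3 * gdens b x4 * gdens a x2) * (K0 * PP x1 x2 x3 x4)"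
        unfolding IH2_def by (rule dom_helper) (auto simp: gd_nonneg PP_bounds(3))
      then show ?thesis by (simp add: mult_ac)
    qed
    then show ?thesis unfolding rho_eq gd_eq by simp
  qed
  show "(\<lambda>(x1,x2,x3,x4). IH2 act a b c d \<xi> x1 x2 x3 x4) integrable_on UNIV" by (rule fubG'(1)[OF K c d])
  show "integral UNIV (\<lambda>(x1,x2,x3,x4). IH2 act a b c d \<xi> x1 x2 x3 x4) = it4 (IH2 act a b c d \<xi>)" by (rule fubG'(2)[OF K c d])
  show "fubok (IH2 act a b c d \<xi>)" by (rule fubG'(3)[OF K c d])
qed

lemma IH3_fub:
  "(\<lambda>(x1,x2,x3,x4). IH3 act a b c d \<xi> x1 x2 x3 x4) integrable_on UNIV"
  "integral UNIV (\<lambda>(x1,x2,x3,x4). IH3 act a b c d \<xi> x1 x2 x3 x4) = it4 (IH3 act a b c d \<xi>)"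
  "fubok (IH3 act a b c d \<xi>)"
proof -
  have K: "0 \<le> 9 * K0" using K0_nonneg by simp
  have c: "continuous_on UNIV (\<lambda>(x1,x2,x3,x4). IH3 act a b c d \<xi> x1 x2 x3 x4)"
    unfolding unc4 IH3_def by (intro continuous_intros gd_cont orbit_cont)
  have d: "norm (IH3 act a b c d \<xi> x1 x2 x3 x4) \<le> (9 * K0 * (normal_density 0 (exp d) x1 * (1 + x1\<^sup>2))) *
      (normal_density 0 (exp a) x2 * (1 + x2\<^sup>2)) * (normal_density 0 (exp c) x3 * (1 + x3\<^sup>2)) *
      (normal_density 0 (exp b) x4 * (1 + x4\<^sup>2))" for x1 x2 x3 x4
  proof -
    have "norm (IH3 act a b c d \<xi> x1 x2 x3 x4) \<le> (gdens d x1 * gdens a x2 * gdens c x3 * gdens b x4) * (K0 * PP x1 x2 x3 x4)"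
      proof -
      have "norm (IH3 act a b c d \<xi> x1 x2 x3 x4) \<le> (gdens d x1 * gdens c x3 * gdens b x4 * gdens a x2) * (K0 * PP x1 x2 x3 x4)"
        unfolding IH3_def by (rule dom_helper) (auto simp: gd_nonneg PP_bounds(4))
      then show ?thesis by (simp add: mult_ac)
    qed
    then show ?thesis unfolding rho_eq gd_eq by simp
  qed
  show "(\<lambda>(x1,x2,x3,x4). IH3 act a b c d \<xi> x1 x2 x3 x4) integrable_on UNIV" by (rule fubG'(1)[OF K c d])
  show "integral UNIV (\<lambda>(x1,x2,x3,x4). IH3 act a b c d \<xi> x1 x2 x3 x4) = it4 (IH3 act a b c d \<xi>)" by (rule fubG'(2)[OF K c d])
  show "fubok (IH3 act a b c d \<xi>)" by (rule fubG'(3)[OF K c d])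
qed

lemma IG0_fub:
  "(\<lambda>(x1,x2,x3,x4). IG0 a b c d \<xi> x1 x2 x3 x4) integrable_on UNIV"
  "integral UNIV (\<lambda>(x1,x2,x3,x4). IG0 a b c d \<xi> x1 x2 x3 x4) = it4 (IG0 a b c d \<xi>)"
  "fubok (IG0 a b c d \<xi>)"
proof -
  have K: "0 \<le> 9 * K0" using K0_nonneg by simp
  have c: "continuous_on UNIV (\<lambda>(x1,x2,x3,x4). IG0 a b c d \<xi> x1 x2 x3 x4)"
    unfolding unc4 IG0_def by (intro continuous_intros gd_cont)
  have d: "norm (IG0 a b c d \<xi> x1 x2 x3 x4) \<le> (9 * K0 * (normal_density 0 (exp d) x1 * (1 + x1\<^sup>2))) *
      (normal_density 0 (exp a) x2 * (1 + x2\<^sup>2)) * (normal_density 0 (exp b) x3 * (1 + x3\<^sup>2)) *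
      (normal_density 0 (exp c) x4 * (1 + x4\<^sup>2))" for x1 x2 x3 x4
  proof -
    have "norm (IG0 a b c d \<xi> x1 x2 x3 x4) \<le> (gdens d x1 * gdens a x2 * gdens b x3 * gdens c x4) * (K0 * PP x1 x2 x3 x4)"
      proof -
      have "norm (IG0 a b c d \<xi> x1 x2 x3 x4) = (gdens d x1 * gdens a x2 * gdens b x3 * gdens c x4) * norm \<xi>"
        unfolding IG0_def by (simp add: gd_nonneg mult_ac)
      also have "\<dots> \<le> (gdens d x1 * gdens a x2 * gdens b x3 * gdens c x4) * (K0 * PP x1 x2 x3 x4)"
      proof -
        have "K0 * 1 \<le> K0 * PP x1 x2 x3 x4" using PP_bounds(6)[of x1 x2 x3 x4] K0_nonneg by (intro mult_left_mono) auto
        then have "norm \<xi> \<le> K0 * PP x1 x2 x3 x4" using K0_ge by simp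
        then show ?thesis by (intro mult_left_mono) (auto simp: gd_nonneg)
      qed
      finally show ?thesis .
    qed
    then show ?thesis unfolding rho_eq gd_eq by simp
  qed
  show "(\<lambda>(x1,x2,x3,x4). IG0 a b c d \<xi> x1 x2 x3 x4) integrable_on UNIV" by (rule fubG'(1)[OF K c d])
  show "integral UNIV (\<lambda>(x1,x2,x3,x4). IG0 a b c d \<xi> x1 x2 x3 x4) = it4 (IG0 a b c d \<xi>)" by (rule fubG'(2)[OF K c d])
  show "fubok (IG0 a b c d \<xi>)" by (rule fubG'(3)[OF K c d])
qed

lemma IG3_fub:
  "(\<lambda>(x1,x2,x3,x4). IG3 a b c d \<xi> x1 x2 x3 x4) integrable_on UNIV"
  "integral UNIV (\<lambda>(x1,x2,x3,x4). IG3 a b c d \<xi> x1 x2 x3 x4) = it4 (IG3 a b c d \<xi>)"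
  "fubok (IG3 a b c d \<xi>)"
proof -
  have K: "0 \<le> 9 * K0" using K0_nonneg by simp
  have c: "continuous_on UNIV (\<lambda>(x1,x2,x3,x4). IG3 a b c d \<xi> x1 x2 x3 x4)"
    unfolding unc4 IG3_def by (intro continuous_intros gd_cont)
  have d: "norm (IG3 a b c d \<xi> x1 x2 x3 x4) \<le> (9 * K0 * (normal_density 0 (exp d) x1 * (1 + x1\<^sup>2))) *
      (normal_density 0 (exp a) x2 * (1 + x2\<^sup>2)) * (normal_density 0 (exp c) x3 * (1 + x3\<^sup>2)) *
      (normal_density 0 (exp b) x4 * (1 + x4\<^sup>2))" for x1 x2 x3 x4
  proof -
    have "norm (IG3 a b c d \<xi> x1 x2 x3 x4) \<le> (gdens d x1 * gdens a x2 * gdens c x3 * gdens b x4) * (K0 * PP x1 x2 x3 x4)"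
      proof -
      have "norm (IG3 a b c d \<xi> x1 x2 x3 x4) = (gdens d x1 * gdens a x2 * gdens c x3 * gdens b x4) * norm \<xi>"
        unfolding IG3_def by (simp add: gd_nonneg mult_ac)
      also have "\<dots> \<le> (gdens d x1 * gdens a x2 * gdens c x3 * gdens b x4) * (K0 * PP x1 x2 x3 x4)"
      proof -
        have "K0 * 1 \<le> K0 * PP x1 x2 x3 x4" using PP_bounds(6)[of x1 x2 x3 x4] K0_nonneg by (intro mult_left_mono) auto
        then have "norm \<xi> \<le> K0 * PP x1 x2 x3 x4" using K0_ge by simp
        then show ?thesis by (intro mult_left_mono) (auto simp: gd_nonneg)
      qed
      finally show ?thesis .
    qed
    then show ?thesis unfolding rho_eq gd_eq by simp
  qed
  show "(\<lambda>(x1,x2,x3,x4). IG3 a b c d \<xi> x1 x2 x3 x4) integrable_on UNIV" by (rule fubG'(1)[OF K c d])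
  show "integral UNIV (\<lambda>(x1,x2,x3,x4). IG3 a b c d \<xi> x1 x2 x3 x4) = it4 (IG3 a b c d \<xi>)" by (rule fubG'(2)[OF K c d])
  show "fubok (IG3 a b c d \<xi>)" by (rule fubG'(3)[OF K c d])
qed


lemma sum4_le: "1 \<le> u1 \<Longrightarrow> 1 \<le> u2 \<Longrightarrow> 1 \<le> u3 \<Longrightarrow> 1 \<le> u4 \<Longrightarrow> u1 + u2 + u3 + u4 \<le> 4 * (u1 * u2 * u3 * (u4::real))"
proof -
  assume g: "1 \<le> u1" "1 \<le> u2" "1 \<le> u3" "1 \<le> u4"
  have g12: "1 \<le> u1 * u2" using g by (intro ge1_mult)
  have g123: "1 \<le> u1 * u2 * u3" using g g12 by (intro ge1_mult)
  have "u1 \<le> u1 * (u2 * u3 * u4)" using g ge1_mult[OF ge1_mult[OF g(2) g(3)] g(4)] by (intro le_mult_ge1) auto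
  moreover have "u2 \<le> u2 * (u1 * u3 * u4)" using g ge1_mult[OF ge1_mult[OF g(1) g(3)] g(4)] by (intro le_mult_ge1) auto
  moreover have "u3 \<le> u3 * (u1 * u2 * u4)" using g ge1_mult[OF g12 g(4)] by (intro le_mult_ge1) auto
  moreover have "u4 \<le> u4 * (u1 * u2 * u3)" using g g123 by (intro le_mult_ge1) auto
  ultimately show ?thesis by (simp add: mult_ac)
qed

lemma step1_inner:
  assumes al: "exp a * exp d / exp b \<le> 1"
  shows "norm (integral UNIV (\<lambda>x4. IF1 act a b c d \<xi> x1 x2 x3 x4) - integral UNIV (\<lambda>x4. IH1 act a b c d \<xi> x1 x2 x3 x4))
     \<le> (72 * (exp b * exp d / exp c) * DD) * (gdens d x1 * (1 + (x1 / exp d)\<^sup>2)) * (gdens a x2 * (1 + \<bar>x2\<bar> / exp a)) * (gdens b x3 * (1 + \<bar>x3\<bar> / exp b))"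
proof -
  define r0 where "r0 = gdens d x1 * gdens b x3 * gdens a x2"
  define K where "K = (\<lambda>z. act (x2, x3 + x1 * x2, z, x1) \<xi>)"
  define T where "T = 2 * x1 * x3 + x1\<^sup>2 * x2"
  have r00: "0 \<le> r0" by (simp add: r0_def gd_nonneg)
  have e1: "(\<lambda>x4. IF1 act a b c d \<xi> x1 x2 x3 x4) = (\<lambda>x4. r0 *\<^sub>R (normal_density 0 (exp c) x4 *\<^sub>R K (x4 + T)))"
    by (rule ext) (simp add: IF1_def r0_def K_def T_def gd_eq algebra_simps)
  have e2: "(\<lambda>x4. IH1 act a b c d \<xi> x1 x2 x3 x4) = (\<lambda>x4. r0 *\<^sub>R (normal_density 0 (exp c) x4 *\<^sub>R K x4))"
    by (rule ext) (simp add: IH1_def r0_def K_def gd_eq algebra_simps)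
  have Kc: "continuous_on UNIV K" unfolding K_def by (intro orbit_cont continuous_intros)
  have KB: "norm (K w - K 0) \<le> dZ + (dZ / exp c) * \<bar>w\<bar>" for w
  proof -
    have "K w = act (x2, x3 + x1 * x2, 0, x1) (act (hZ w) \<xi>)"
      unfolding K_def act_mult[OF CA, symmetric] by (simp add: hmult_def hZ_def)
    moreover have "K 0 = act (x2, x3 + x1 * x2, 0, x1) \<xi>" unfolding K_def ..
    ultimately have "norm (K w - K 0) = norm (act (hZ w) \<xi> - \<xi>)" by (simp add: act_iso[OF CA])
    also have "\<dots> \<le> (1 + \<bar>w\<bar> / exp c) * dZ" by (rule dispZ(2))
    finally show ?thesis by (simp add: algebra_simps)
  qed
  have sh: "norm (integral UNIV (\<lambda>x4. normal_density 0 (exp c) x4 *\<^sub>R K (x4 + T)) - integral UNIV (\<lambda>x4. normal_density 0 (exp c) x4 *\<^sub>R K x4))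
      \<le> 12 * (\<bar>T\<bar> / exp c) * (dZ + (dZ / exp c) * exp c)"
    by (rule shift1[OF exp_gt_zero Kc dle(3) _ KB]) (simp add: dle)
  have tb: "\<bar>T\<bar> / exp c \<le> 3 * (exp b * exp d / exp c) * ((1 + (x1 / exp d)\<^sup>2) * (1 + \<bar>x2\<bar> / exp a) * (1 + \<bar>x3\<bar> / exp b))"
    unfolding T_def by (rule Tbound[OF exp_gt_zero exp_gt_zero exp_gt_zero exp_gt_zero al])
  have "norm (integral UNIV (\<lambda>x4. IF1 act a b c d \<xi> x1 x2 x3 x4) - integral UNIV (\<lambda>x4. IH1 act a b c d \<xi> x1 x2 x3 x4))
      = r0 * norm (integral UNIV (\<lambda>x4. normal_density 0 (exp c) x4 *\<^sub>R K (x4 + T)) - integral UNIV (\<lambda>x4. normal_density 0 (exp c) x4 *\<^sub>R K x4))"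
    unfolding e1 e2 integral_cmul using r00 by (simp add: scaleR_diff_right[symmetric])
  also have "\<dots> \<le> r0 * (12 * (\<bar>T\<bar> / exp c) * (dZ + (dZ / exp c) * exp c))"
    using sh r00 by (rule mult_left_mono)
  also have "\<dots> = r0 * (24 * dZ * (\<bar>T\<bar> / exp c))" by simp
  also have "\<dots> \<le> r0 * (24 * DD * (3 * (exp b * exp d / exp c) * ((1 + (x1 / exp d)\<^sup>2) * (1 + \<bar>x2\<bar> / exp a) * (1 + \<bar>x3\<bar> / exp b))))"
    using r00 dle tb by (intro mult_left_mono mult_mono) auto
  also have "\<dots> = (72 * (exp b * exp d / exp c) * DD) * (gdens d x1 * (1 + (x1 / exp d)\<^sup>2)) * (gdens a x2 * (1 + \<bar>x2\<bar> / exp a)) * (gdens b x3 * (1 + \<bar>x3\<bar> / exp b))"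
    unfolding r0_def by (simp add: mult_ac)
  finally show ?thesis .
qed


lemma step2_inner:
  assumes be: "exp b * exp d / exp c \<le> 1"
  shows "norm (integral UNIV (\<lambda>x4. IH2 act a b c d \<xi> x1 x2 x3 x4) - integral UNIV (\<lambda>x4. IH3 act a b c d \<xi> x1 x2 x3 x4))
     \<le> (60 * (exp a * exp d / exp b) * DD) * (gdens d x1 * (1 + (x1 / exp d)\<^sup>2)) * (gdens a x2 * (1 + \<bar>x2\<bar> / exp a)) * gdens c x3"
proof -
  define r0 where "r0 = gdens d x1 * gdens c x3 * gdens a x2"
  define K where "K = (\<lambda>w. act (x2, w, x3, x1) \<xi>)"
  have r00: "0 \<le> r0" by (simp add: r0_def gd_nonneg)
  have e1: "(\<lambda>x4. IH2 act a b c d \<xi> x1 x2 x3 x4) = (\<lambda>x4. r0 *\<^sub>R (normal_density 0 (exp b) x4 *\<^sub>R K (x4 + x1 * x2)))"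
    by (rule ext) (simp add: IH2_def r0_def K_def gd_eq algebra_simps)
  have e2: "(\<lambda>x4. IH3 act a b c d \<xi> x1 x2 x3 x4) = (\<lambda>x4. r0 *\<^sub>R (normal_density 0 (exp b) x4 *\<^sub>R K x4))"
    by (rule ext) (simp add: IH3_def r0_def K_def gd_eq algebra_simps)
  have Kc: "continuous_on UNIV K" unfolding K_def by (intro orbit_cont continuous_intros)
  have KB: "norm (K w - K 0) \<le> 2 * DD + (DD / exp b + 2 * \<bar>x1\<bar> * DD / exp c) * \<bar>w\<bar>" for w
  proof -
    have "K w = act (x2, 0, x3, x1) (act (hW w) (act (hZ (- 2 * x1 * w)) \<xi>))"
      unfolding K_def act_mult[OF CA, symmetric] by (simp add: hmult_def hZ_def hW_def)
    moreover have "K 0 = act (x2, 0, x3, x1) \<xi>" unfolding K_def ..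
    ultimately have "norm (K w - K 0) = norm (act (hW w) (act (hZ (- 2 * x1 * w)) \<xi>) - \<xi>)" by (simp add: act_iso[OF CA])
    also have "\<dots> \<le> norm (act (hW w) \<xi> - \<xi>) + norm (act (hZ (- 2 * x1 * w)) \<xi> - \<xi>)" by (rule act_comp_disp[OF CA])
    also have "\<dots> \<le> (1 + \<bar>w\<bar> / exp b) * dW + (1 + \<bar>- 2 * x1 * w\<bar> / exp c) * dZ"
      by (intro add_mono dispW(2) dispZ(2))
    also have "\<dots> \<le> (1 + \<bar>w\<bar> / exp b) * DD + (1 + \<bar>- 2 * x1 * w\<bar> / exp c) * DD"
      using dle by (intro add_mono mult_left_mono) auto
    also have "\<dots> = 2 * DD + (DD / exp b + 2 * \<bar>x1\<bar> * DD / exp c) * \<bar>w\<bar>"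
      by (simp add: abs_mult algebra_simps add_divide_distrib)
    finally show ?thesis .
  qed
  have B0: "0 \<le> DD / exp b + 2 * \<bar>x1\<bar> * DD / exp c" using dle by simp
  have sh: "norm (integral UNIV (\<lambda>x4. normal_density 0 (exp b) x4 *\<^sub>R K (x4 + x1 * x2)) - integral UNIV (\<lambda>x4. normal_density 0 (exp b) x4 *\<^sub>R K x4))
      \<le> 12 * (\<bar>x1 * x2\<bar> / exp b) * (2 * DD + (DD / exp b + 2 * \<bar>x1\<bar> * DD / exp c) * exp b)"
    by (rule shift1[OF exp_gt_zero Kc _ B0 KB]) (simp add: dle)
  have eqv: "12 * (\<bar>x1 * x2\<bar> / exp b) * (2 * DD + (DD / exp b + 2 * \<bar>x1\<bar> * DD / exp c) * exp b)
      = 12 * DD * ((\<bar>x1\<bar> * \<bar>x2\<bar> / exp b) * (3 + 2 * \<bar>x1\<bar> * exp b / exp c))"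
    by (simp add: abs_mult field_simps)
  have tb: "(\<bar>x1\<bar> * \<bar>x2\<bar> / exp b) * (3 + 2 * \<bar>x1\<bar> * exp b / exp c) \<le> 5 * (exp a * exp d / exp b) * ((1 + (x1 / exp d)\<^sup>2) * (1 + \<bar>x2\<bar> / exp a))"
    by (rule T2bound[OF exp_gt_zero exp_gt_zero exp_gt_zero exp_gt_zero be])
  have "norm (integral UNIV (\<lambda>x4. IH2 act a b c d \<xi> x1 x2 x3 x4) - integral UNIV (\<lambda>x4. IH3 act a b c d \<xi> x1 x2 x3 x4))
      = r0 * norm (integral UNIV (\<lambda>x4. normal_density 0 (exp b) x4 *\<^sub>R K (x4 + x1 * x2)) - integral UNIV (\<lambda>x4. normal_density 0 (exp b) x4 *\<^sub>R K x4))"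
    unfolding e1 e2 integral_cmul using r00 by (simp add: scaleR_diff_right[symmetric])
  also have "\<dots> \<le> r0 * (12 * DD * ((\<bar>x1\<bar> * \<bar>x2\<bar> / exp b) * (3 + 2 * \<bar>x1\<bar> * exp b / exp c)))"
    using sh r00 unfolding eqv by (rule mult_left_mono)
  also have "\<dots> \<le> r0 * (12 * DD * (5 * (exp a * exp d / exp b) * ((1 + (x1 / exp d)\<^sup>2) * (1 + \<bar>x2\<bar> / exp a))))"
    using r00 dle tb by (intro mult_left_mono) auto
  also have "\<dots> = (60 * (exp a * exp d / exp b) * DD) * (gdens d x1 * (1 + (x1 / exp d)\<^sup>2)) * (gdens a x2 * (1 + \<bar>x2\<bar> / exp a)) * gdens c x3"
    unfolding r0_def by (simp add: mult_ac)
  finally show ?thesis .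
qed

lemma triv_core:
  fixes V :: "real \<Rightarrow> 'e" and s :: real
  assumes VB: "\<And>t. norm (V t - \<xi>) \<le> 4 * DD * (u * (1 + \<bar>t\<bar> / exp s))" and u0: "0 \<le> u" and r00: "0 \<le> r0"
    and fi: "(\<lambda>t. (r0 * gdens s t) *\<^sub>R V t) integrable_on UNIV" "(\<lambda>t. (r0 * gdens s t) *\<^sub>R \<xi>) integrable_on UNIV"
  shows "norm (integral UNIV (\<lambda>t. (r0 * gdens s t) *\<^sub>R V t) - integral UNIV (\<lambda>t. (r0 * gdens s t) *\<^sub>R \<xi>)) \<le> 8 * DD * r0 * u"
proof -
  have "norm (integral UNIV (\<lambda>t. (r0 * gdens s t) *\<^sub>R V t) - integral UNIV (\<lambda>t. (r0 * gdens s t) *\<^sub>R \<xi>))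
      = norm (integral UNIV (\<lambda>t. (r0 * gdens s t) *\<^sub>R V t - (r0 * gdens s t) *\<^sub>R \<xi>))"
    by (simp add: integral_diff[OF fi])
  also have "\<dots> \<le> integral UNIV (\<lambda>t. (4 * DD * r0 * u) * (gdens s t * (1 + \<bar>t\<bar> / exp s)))"
  proof (rule integral_norm_bound_integral)
    show "(\<lambda>t. (r0 * gdens s t) *\<^sub>R V t - (r0 * gdens s t) *\<^sub>R \<xi>) integrable_on UNIV" by (rule integrable_diff[OF fi])
    show "(\<lambda>t. (4 * DD * r0 * u) * (gdens s t * (1 + \<bar>t\<bar> / exp s))) integrable_on UNIV"
      by (intro integrable_on_mult_right q_int(1))
    fix t
    have "norm ((r0 * gdens s t) *\<^sub>R V t - (r0 * gdens s t) *\<^sub>R \<xi>) = (r0 * gdens s t) * norm (V t - \<xi>)"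
      using r00 by (simp add: scaleR_diff_right[symmetric] gd_nonneg)
    also have "\<dots> \<le> (r0 * gdens s t) * (4 * DD * (u * (1 + \<bar>t\<bar> / exp s)))"
      using r00 VB by (intro mult_left_mono) (auto simp: gd_nonneg)
    also have "\<dots> = (4 * DD * r0 * u) * (gdens s t * (1 + \<bar>t\<bar> / exp s))" by (simp add: mult_ac)
    finally show "norm ((r0 * gdens s t) *\<^sub>R V t - (r0 * gdens s t) *\<^sub>R \<xi>) \<le> (4 * DD * r0 * u) * (gdens s t * (1 + \<bar>t\<bar> / exp s))" .
  qed
  also have "\<dots> = (4 * DD * r0 * u) * integral UNIV (\<lambda>t. gdens s t * (1 + \<bar>t\<bar> / exp s))" by simp
  also have "\<dots> \<le> (4 * DD * r0 * u) * 2" using dle r00 u0 q_int(2) by (intro mult_left_mono) auto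
  finally show ?thesis by simp
qed

lemma triv1_inner:
  "norm (integral UNIV (\<lambda>x4. IF1 act a b c d \<xi> x1 x2 x3 x4) - integral UNIV (\<lambda>x4. IG0 a b c d \<xi> x1 x2 x3 x4))
     \<le> (8 * DD) * (gdens d x1 * (1 + \<bar>x1\<bar> / exp d)) * (gdens a x2 * (1 + \<bar>x2\<bar> / exp a)) * (gdens b x3 * (1 + \<bar>x3\<bar> / exp b))"
proof -
  define r0 where "r0 = gdens d x1 * gdens b x3 * gdens a x2"
  define u where "u = (1 + \<bar>x1\<bar> / exp d) * (1 + \<bar>x2\<bar> / exp a) * (1 + \<bar>x3\<bar> / exp b)"
  define V where "V = (\<lambda>x4. act (x2, x3 + x1 * x2, x4 + 2 * x1 * x3 + x1\<^sup>2 * x2, x1) \<xi>)"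
  have r00: "0 \<le> r0" by (simp add: r0_def gd_nonneg)
  have u0: "0 \<le> u" by (simp add: u_def)
  have e1: "(\<lambda>x4. IF1 act a b c d \<xi> x1 x2 x3 x4) = (\<lambda>t. (r0 * gdens c t) *\<^sub>R V t)"
    by (rule ext) (simp add: IF1_def r0_def V_def mult_ac)
  have e2: "(\<lambda>x4. IG0 a b c d \<xi> x1 x2 x3 x4) = (\<lambda>t. (r0 * gdens c t) *\<^sub>R \<xi>)"
    by (rule ext) (simp add: IG0_def r0_def mult_ac)
  have VB: "norm (V t - \<xi>) \<le> 4 * DD * (u * (1 + \<bar>t\<bar> / exp c))" for t
  proof -
    have "V t = act (hmult (hX x1) (hmult (hZ t) (hmult (hW x3) (hY x2)))) \<xi>"
      unfolding V_def G2 by (simp add: algebra_simps power2_eq_square)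
    then have "norm (V t - \<xi>) \<le> (1 + \<bar>x2\<bar> / exp a) * dY + (1 + \<bar>x3\<bar> / exp b) * dW + (1 + \<bar>t\<bar> / exp c) * dZ + (1 + \<bar>x1\<bar> / exp d) * dX"
      using Fdisp2 by simp
    also have "\<dots> \<le> (1 + \<bar>x2\<bar> / exp a) * DD + (1 + \<bar>x3\<bar> / exp b) * DD + (1 + \<bar>t\<bar> / exp c) * DD + (1 + \<bar>x1\<bar> / exp d) * DD"
      using dle by (intro add_mono mult_left_mono) auto
    also have "\<dots> = DD * ((1 + \<bar>x1\<bar> / exp d) + (1 + \<bar>x2\<bar> / exp a) + (1 + \<bar>x3\<bar> / exp b) + (1 + \<bar>t\<bar> / exp c))"
      by (simp add: algebra_simps)
    also have "\<dots> \<le> DD * (4 * ((1 + \<bar>x1\<bar> / exp d) * (1 + \<bar>x2\<bar> / exp a) * (1 + \<bar>x3\<bar> / exp b) * (1 + \<bar>t\<bar> / exp c)))"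
      using dle by (intro mult_left_mono sum4_le) auto
    also have "\<dots> = 4 * DD * (u * (1 + \<bar>t\<bar> / exp c))" by (simp add: u_def mult_ac)
    finally show ?thesis .
  qed
  have fub: "fubok (IF1 act a b c d \<xi>)" "fubok (IG0 a b c d \<xi>)" by (rule IF1_fub(3), rule IG0_fub(3))
  have fi: "(\<lambda>t. (r0 * gdens c t) *\<^sub>R V t) integrable_on UNIV" "(\<lambda>t. (r0 * gdens c t) *\<^sub>R \<xi>) integrable_on UNIV"
    using fub unfolding fubok_def e1[symmetric] e2[symmetric] by blast+
  have "norm (integral UNIV (\<lambda>x4. IF1 act a b c d \<xi> x1 x2 x3 x4) - integral UNIV (\<lambda>x4. IG0 a b c d \<xi> x1 x2 x3 x4)) \<le> 8 * DD * r0 * u"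
    unfolding e1 e2 by (rule triv_core[OF VB u0 r00 fi])
  also have "\<dots> = (8 * DD) * (gdens d x1 * (1 + \<bar>x1\<bar> / exp d)) * (gdens a x2 * (1 + \<bar>x2\<bar> / exp a)) * (gdens b x3 * (1 + \<bar>x3\<bar> / exp b))"
    by (simp add: r0_def u_def mult_ac)
  finally show ?thesis .
qed

lemma triv2_inner:
  "norm (integral UNIV (\<lambda>x4. IH3 act a b c d \<xi> x1 x2 x3 x4) - integral UNIV (\<lambda>x4. IG3 a b c d \<xi> x1 x2 x3 x4))
     \<le> (8 * DD) * (gdens d x1 * (1 + \<bar>x1\<bar> / exp d)) * (gdens a x2 * (1 + \<bar>x2\<bar> / exp a)) * (gdens c x3 * (1 + \<bar>x3\<bar> / exp c))"
proof -
  define r0 where "r0 = gdens d x1 * gdens c x3 * gdens a x2"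
  define u where "u = (1 + \<bar>x1\<bar> / exp d) * (1 + \<bar>x2\<bar> / exp a) * (1 + \<bar>x3\<bar> / exp c)"
  define V where "V = (\<lambda>x4. act (x2, x4, x3, x1) \<xi>)"
  have r00: "0 \<le> r0" by (simp add: r0_def gd_nonneg)
  have u0: "0 \<le> u" by (simp add: u_def)
  have e1: "(\<lambda>x4. IH3 act a b c d \<xi> x1 x2 x3 x4) = (\<lambda>t. (r0 * gdens b t) *\<^sub>R V t)"
    by (rule ext) (simp add: IH3_def r0_def V_def mult_ac)
  have e2: "(\<lambda>x4. IG3 a b c d \<xi> x1 x2 x3 x4) = (\<lambda>t. (r0 * gdens b t) *\<^sub>R \<xi>)"
    by (rule ext) (simp add: IG3_def r0_def mult_ac)
  have VB: "norm (V t - \<xi>) \<le> 4 * DD * (u * (1 + \<bar>t\<bar> / exp b))" for t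
  proof -
    have "norm (V t - \<xi>) \<le> (1 + \<bar>x2\<bar> / exp a) * dY + (1 + \<bar>t\<bar> / exp b) * dW + (1 + \<bar>x3\<bar> / exp c) * dZ + (1 + \<bar>x1\<bar> / exp d) * dX"
      unfolding V_def by (rule Fdisp)
    also have "\<dots> \<le> (1 + \<bar>x2\<bar> / exp a) * DD + (1 + \<bar>t\<bar> / exp b) * DD + (1 + \<bar>x3\<bar> / exp c) * DD + (1 + \<bar>x1\<bar> / exp d) * DD"
      using dle by (intro add_mono mult_left_mono) auto
    also have "\<dots> = DD * ((1 + \<bar>x1\<bar> / exp d) + (1 + \<bar>x2\<bar> / exp a) + (1 + \<bar>x3\<bar> / exp c) + (1 + \<bar>t\<bar> / exp b))"
      by (simp add: algebra_simps)
    also have "\<dots> \<le> DD * (4 * ((1 + \<bar>x1\<bar> / exp d) * (1 + \<bar>x2\<bar> / exp a) * (1 + \<bar>x3\<bar> / exp c) * (1 + \<bar>t\<bar> / exp b)))"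
      using dle by (intro mult_left_mono sum4_le) auto
    also have "\<dots> = 4 * DD * (u * (1 + \<bar>t\<bar> / exp b))" by (simp add: u_def mult_ac)
    finally show ?thesis .
  qed
  have fub: "fubok (IH3 act a b c d \<xi>)" "fubok (IG3 a b c d \<xi>)" by (rule IH3_fub(3), rule IG3_fub(3))
  have fi: "(\<lambda>t. (r0 * gdens b t) *\<^sub>R V t) integrable_on UNIV" "(\<lambda>t. (r0 * gdens b t) *\<^sub>R \<xi>) integrable_on UNIV"
    using fub unfolding fubok_def e1[symmetric] e2[symmetric] by blast+
  have "norm (integral UNIV (\<lambda>x4. IH3 act a b c d \<xi> x1 x2 x3 x4) - integral UNIV (\<lambda>x4. IG3 a b c d \<xi> x1 x2 x3 x4)) \<le> 8 * DD * r0 * u"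
    unfolding e1 e2 by (rule triv_core[OF VB u0 r00 fi])
  also have "\<dots> = (8 * DD) * (gdens d x1 * (1 + \<bar>x1\<bar> / exp d)) * (gdens a x2 * (1 + \<bar>x2\<bar> / exp a)) * (gdens c x3 * (1 + \<bar>x3\<bar> / exp c))"
    by (simp add: r0_def u_def mult_ac)
  finally show ?thesis .
qed


lemma gint_const: "integral UNIV (\<lambda>x. gdens s x *\<^sub>R v) = v"
  using int_scaleR_const(2)[OF q_int(5), of s v] q_int(6)[of s] by simp

lemma it4_IG0: "it4 (IG0 a b c d \<xi>) = \<xi>"
proof -
  have pw: "IG0 a b c d \<xi> x1 x2 x3 x4 = gdens c x4 *\<^sub>R (gdens b x3 *\<^sub>R (gdens a x2 *\<^sub>R (gdens d x1 *\<^sub>R \<xi>)))" for x1 x2 x3 x4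
    by (simp add: IG0_def mult_ac)
  show ?thesis unfolding it4_def pw by (simp only: gint_const)
qed

lemma it4_IG3: "it4 (IG3 a b c d \<xi>) = \<xi>"
proof -
  have pw: "IG3 a b c d \<xi> x1 x2 x3 x4 = gdens b x4 *\<^sub>R (gdens c x3 *\<^sub>R (gdens a x2 *\<^sub>R (gdens d x1 *\<^sub>R \<xi>)))" for x1 x2 x3 x4
    by (simp add: IG3_def mult_ac)
  show ?thesis unfolding it4_def pw by (simp only: gint_const)
qed

lemma R1: "nut_act act d c b a \<xi> = it4 (IF1 act a b c d \<xi>)"
proof -
  define F1 where "F1 = (\<lambda>(x1,x2,x3,x4). IF1 act a b c d \<xi> x1 x2 x3 x4)"
  have "(\<lambda>(s4, s3, s2, s1). (gdens d s4 * gdens c s3 * gdens b s2 * gdens a s1) *\<^sub>R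
       act (hmult (hX s4) (hmult (hZ s3) (hmult (hW s2) (hY s1)))) \<xi>) = (\<lambda>x. F1 (pm1 x))"
    by (auto simp: F1_def pm1_def IF1_def G2 mult_ac fun_eq_iff)
  then have "nut_act act d c b a \<xi> = integral UNIV (\<lambda>x. F1 (pm1 x))" by (simp add: nut_act_def)
  also have "\<dots> = integral UNIV F1" by (rule pm1_int(1)) (use IF1_fub(1) in \<open>simp add: F1_def\<close>)
  also have "\<dots> = it4 (IF1 act a b c d \<xi>)" unfolding F1_def by (rule IF1_fub(2))
  finally show ?thesis .
qed

lemma R2: "it4 (IH1 act a b c d \<xi>) = it4 (IH2 act a b c d \<xi>)"
proof -
  define F where "F = (\<lambda>(x1,x2,x3,x4). IH1 act a b c d \<xi> x1 x2 x3 x4)"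
  have "(\<lambda>x. F (pm2 x)) = (\<lambda>(x1,x2,x3,x4). IH2 act a b c d \<xi> x1 x2 x3 x4)"
    by (auto simp: F_def pm2_def IH1_def IH2_def fun_eq_iff)
  moreover have "integral UNIV (\<lambda>x. F (pm2 x)) = integral UNIV F"
    by (rule pm2_int(1)) (use IH1_fub(1) in \<open>simp add: F_def\<close>)
  ultimately show ?thesis using IH1_fub(2) IH2_fub(2) unfolding F_def by simp
qed

lemma R3: "nu_act act a b c d \<xi> = it4 (IH3 act a b c d \<xi>)"
proof -
  define F where "F = (\<lambda>(s1,s2,s3,s4). NUf act a b c d \<xi> s1 s2 s3 s4)"
  have nu: "nu_act act a b c d \<xi> = integral UNIV F" by (simp add: nu_act_def F_def NUf_def)
  have "(\<lambda>x. F (pm3 x)) = (\<lambda>(x1,x2,x3,x4). IH3 act a b c d \<xi> x1 x2 x3 x4)"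
    by (auto simp: F_def pm3_def NUf_def IH3_def G1 mult_ac fun_eq_iff)
  moreover have "integral UNIV (\<lambda>x. F (pm3 x)) = integral UNIV F"
    by (rule pm3_int(1)) (use NU_fub in \<open>simp add: F_def\<close>)
  ultimately show ?thesis using IH3_fub(2) nu by simp
qed

lemma prod_le8: "0 \<le> A \<Longrightarrow> A \<le> 2 \<Longrightarrow> 0 \<le> B \<Longrightarrow> B \<le> 2 \<Longrightarrow> 0 \<le> C \<Longrightarrow> C \<le> 2 \<Longrightarrow> A * B * C \<le> (8::real)"
proof -
  assume h: "0 \<le> A" "A \<le> 2" "0 \<le> B" "B \<le> 2" "0 \<le> C" "C \<le> 2"
  have "A * B \<le> 2 * 2" using h by (intro mult_mono) auto
  then have "A * B * C \<le> (2 * 2) * 2" using h by (intro mult_mono) auto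
  then show ?thesis by simp
qed

lemma main_bound:
  "norm (nu_act act a b c d \<xi> - nut_act act d c b a \<xi>) \<le> 576 * (exp (a + d - b) + exp (b + d - c)) * DD"
proof -
  define \<alpha> where "\<alpha> = exp a * exp d / exp b"
  define \<beta> where "\<beta> = exp b * exp d / exp c"
  have ab: "exp (a + d - b) = \<alpha>" "exp (b + d - c) = \<beta>" unfolding \<alpha>_def \<beta>_def by (simp_all add: exp_add exp_diff)
  have a0: "\<alpha> > 0" "\<beta> > 0" unfolding \<alpha>_def \<beta>_def by auto
  have qI: "0 \<le> integral UNIV (\<lambda>x. gdens s x * (1 + \<bar>x\<bar> / exp s))" for s
    by (rule integral_nonneg[OF q_int(1)]) (simp add: gd_nonneg)
  have q0: "0 \<le> gdens s x * (1 + \<bar>x\<bar> / exp s)" "0 \<le> gdens s x * (1 + (x / exp s)\<^sup>2)" for s x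
    by (simp_all add: gd_nonneg)
  note nut = R1 and nu = R3
  have tri: "norm (nu_act act a b c d \<xi> - nut_act act d c b a \<xi>) \<le> 128 * DD"
  proof -
    have t1: "norm (it4 (IF1 act a b c d \<xi>) - it4 (IG0 a b c d \<xi>)) \<le> (8 * DD) *
        integral UNIV (\<lambda>x. gdens d x * (1 + \<bar>x\<bar> / exp d)) * integral UNIV (\<lambda>x. gdens a x * (1 + \<bar>x\<bar> / exp a)) *
        integral UNIV (\<lambda>x. gdens b x * (1 + \<bar>x\<bar> / exp b))"
      by (rule it4_diff[OF IF1_fub(3) IG0_fub(3) q_int(1) q_int(1) q_int(1) q0(1) q0(1) _ triv1_inner]) (use dle in simp)
    have t2: "norm (it4 (IH3 act a b c d \<xi>) - it4 (IG3 a b c d \<xi>)) \<le> (8 * DD) *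
        integral UNIV (\<lambda>x. gdens d x * (1 + \<bar>x\<bar> / exp d)) * integral UNIV (\<lambda>x. gdens a x * (1 + \<bar>x\<bar> / exp a)) *
        integral UNIV (\<lambda>x. gdens c x * (1 + \<bar>x\<bar> / exp c))"
      by (rule it4_diff[OF IH3_fub(3) IG3_fub(3) q_int(1) q_int(1) q_int(1) q0(1) q0(1) _ triv2_inner]) (use dle in simp)
    have p1: "integral UNIV (\<lambda>x. gdens d x * (1 + \<bar>x\<bar> / exp d)) * integral UNIV (\<lambda>x. gdens a x * (1 + \<bar>x\<bar> / exp a)) *
        integral UNIV (\<lambda>x. gdens b x * (1 + \<bar>x\<bar> / exp b)) \<le> 8"
      by (intro prod_le8 qI q_int(2))
    have p2: "integral UNIV (\<lambda>x. gdens d x * (1 + \<bar>x\<bar> / exp d)) * integral UNIV (\<lambda>x. gdens a x * (1 + \<bar>x\<bar> / exp a)) *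
        integral UNIV (\<lambda>x. gdens c x * (1 + \<bar>x\<bar> / exp c)) \<le> 8"
      by (intro prod_le8 qI q_int(2))
    have t1': "norm (nut_act act d c b a \<xi> - \<xi>) \<le> 64 * DD"
      using order_trans[OF t1[unfolded mult.assoc[of "8 * DD"]] mult_left_mono[OF p1, of "8 * DD"]] dle
      unfolding nut it4_IG0 by simp
    have t2': "norm (nu_act act a b c d \<xi> - \<xi>) \<le> 64 * DD"
      using order_trans[OF t2[unfolded mult.assoc[of "8 * DD"]] mult_left_mono[OF p2, of "8 * DD"]] dle
      unfolding nu it4_IG3 by simp
    have "norm (nu_act act a b c d \<xi> - nut_act act d c b a \<xi>) \<le> norm (nu_act act a b c d \<xi> - \<xi>) + norm (nut_act act d c b a \<xi> - \<xi>)"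
      using norm_triangle_ineq4[of "nu_act act a b c d \<xi> - \<xi>" "nut_act act d c b a \<xi> - \<xi>"] by simp
    then show ?thesis using t1' t2' by simp
  qed
  show ?thesis
  proof (cases "\<alpha> \<le> 1 \<and> \<beta> \<le> 1")
    case False
    then have "1 \<le> \<alpha> + \<beta>" using a0 by auto
    then have "128 * DD \<le> 576 * (\<alpha> + \<beta>) * DD" using dle by (simp add: mult_right_mono)
    then show ?thesis using tri ab by simp
  next
    case True
    then have al: "exp a * exp d / exp b \<le> 1" and be: "exp b * exp d / exp c \<le> 1" unfolding \<alpha>_def \<beta>_def by auto
    have s1: "norm (it4 (IF1 act a b c d \<xi>) - it4 (IH1 act a b c d \<xi>)) \<le> (72 * \<beta> * DD) *
        integral UNIV (\<lambda>x. gdens d x * (1 + (x / exp d)\<^sup>2)) * integral UNIV (\<lambda>x. gdens a x * (1 + \<bar>x\<bar> / exp a)) *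
        integral UNIV (\<lambda>x. gdens b x * (1 + \<bar>x\<bar> / exp b))"
      unfolding \<beta>_def
      by (rule it4_diff[OF IF1_fub(3) IH1_fub(3) q_int(3) q_int(1) q_int(1) q0(2) q0(1) _ step1_inner[OF al]])
         (use dle in simp)
    have s2: "norm (it4 (IH2 act a b c d \<xi>) - it4 (IH3 act a b c d \<xi>)) \<le> (60 * \<alpha> * DD) *
        integral UNIV (\<lambda>x. gdens d x * (1 + (x / exp d)\<^sup>2)) * integral UNIV (\<lambda>x. gdens a x * (1 + \<bar>x\<bar> / exp a)) *
        integral UNIV (gdens c)"
      unfolding \<alpha>_def
      by (rule it4_diff[OF IH2_fub(3) IH3_fub(3) q_int(3) q_int(1) q_int(5) q0(2) q0(1) _ step2_inner[OF be]])
         (use dle in simp)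
    have p1: "integral UNIV (\<lambda>x. gdens d x * (1 + (x / exp d)\<^sup>2)) * integral UNIV (\<lambda>x. gdens a x * (1 + \<bar>x\<bar> / exp a)) *
        integral UNIV (\<lambda>x. gdens b x * (1 + \<bar>x\<bar> / exp b)) \<le> 8"
      by (intro prod_le8 qI q_int(2)) (simp_all add: q_int(4))
    have p2: "integral UNIV (\<lambda>x. gdens d x * (1 + (x / exp d)\<^sup>2)) * integral UNIV (\<lambda>x. gdens a x * (1 + \<bar>x\<bar> / exp a)) *
        integral UNIV (gdens c) \<le> 8"
      by (intro prod_le8 qI q_int(2)) (simp_all add: q_int(4) q_int(6))
    have c1: "0 \<le> 72 * \<beta> * DD" "0 \<le> 60 * \<alpha> * DD" using a0 dle by auto
    have s1': "norm (it4 (IF1 act a b c d \<xi>) - it4 (IH1 act a b c d \<xi>)) \<le> 576 * \<beta> * DD"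
      using order_trans[OF s1[unfolded mult.assoc[of "72 * \<beta> * DD"]] mult_left_mono[OF p1 c1(1)]] by simp
    have s2': "norm (it4 (IH2 act a b c d \<xi>) - it4 (IH3 act a b c d \<xi>)) \<le> 480 * \<alpha> * DD"
      using order_trans[OF s2[unfolded mult.assoc[of "60 * \<alpha> * DD"]] mult_left_mono[OF p2 c1(2)]] by simp
    have "norm (nu_act act a b c d \<xi> - nut_act act d c b a \<xi>) = norm (it4 (IF1 act a b c d \<xi>) - it4 (IH3 act a b c d \<xi>))"
      unfolding nu nut by (simp add: norm_minus_commute)
    also have "\<dots> \<le> norm (it4 (IF1 act a b c d \<xi>) - it4 (IH1 act a b c d \<xi>)) + norm (it4 (IH2 act a b c d \<xi>) - it4 (IH3 act a b c d \<xi>))"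
      using norm_triangle_ineq[of "it4 (IF1 act a b c d \<xi>) - it4 (IH1 act a b c d \<xi>)" "it4 (IH2 act a b c d \<xi>) - it4 (IH3 act a b c d \<xi>)"]
      unfolding R2 by simp
    also have "\<dots> \<le> 576 * \<beta> * DD + 480 * \<alpha> * DD" using s1' s2' by simp
    also have "\<dots> \<le> 576 * (\<alpha> + \<beta>) * DD" using a0 dle by (simp add: algebra_simps mult_right_mono)
    finally show ?thesis using ab by simp
  qed
qed

end


theorem lemma5p5:
  assumes "uniformly_convex TYPE('e::banach)"
  shows "\<exists>C>0. \<forall>act :: H \<Rightarrow> 'e \<Rightarrow> 'e. cont_affine_isometric_action act \<longrightarrow>
           (\<forall>a b c d \<xi>. norm (nu_act act a b c d \<xi> - nut_act act d c b a \<xi>)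
              \<le> C * (exp (a + d - b) + exp (b + d - c)) * delta4 act a b c d \<xi>)"
  proof (intro exI[of _ 576] conjI allI impI)
  fix act :: "H \<Rightarrow> 'e \<Rightarrow> 'e" and a b c d :: real and \<xi> :: 'e
  assume CA: "cont_affine_isometric_action act"
  show "norm (nu_act act a b c d \<xi> - nut_act act d c b a \<xi>)
              \<le> 576 * (exp (a + d - b) + exp (b + d - c)) * delta4 act a b c d \<xi>"
    by (rule main_bound[OF CA])
qed simp

end
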